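(* Fix a prompt $x$ and integers $n\ge k\ge 2$. Assume the law of $R(x,y)$ under $y\sim\pi_\theta(\cdot|x)$ has no atoms (so the rewards of independent samples are almost surely pairwise distinct). Let $y^1,\dots,y^n$ be i.i.d. samples from $\pi_\theta(\cdot|x)$, relabeled so that $R(x,y^1)<R(x,y^2)<\dots<R(x,y^n)$. Define $$\hat G=\frac{k}{n}\sum_{i=1}^n\left[R(x,y^i)\frac{\binom{i-1}{k-1}}{\binom{n-1}{k-1}}-\frac{k-1}{n-1}\sum_{j=1}^{i-1}R(x,y^j)\frac{\binom{j-1}{k-2}}{\binom{n-2}{k-2}}\right]\nabla_\theta\log\pi_\theta(y^i\mid x).$$ Then more precisely $$\mathbb{E}\Big[\tfrac1n\sum_{i=1}^n R(x,y^i)\tfrac{\binom{i-1}{k-1}}{\binom{n-1}{k-1}}\nabla_\theta\log\pi_\theta(y^i|x)\Big]=\mathbb{E}_{y}\big[R(x,y)P_{\le,\theta}(y)^{k-1}\nabla_\theta\log\pi_\theta(y|x)\big],$$ $$\mathbb{E}\Big[\tfrac1n\sum_{i=1}^n\tfrac{k-1}{n-1}\sum_{j=1}^{i-1}R(x,y^j)\tfrac{\binom{j-1}{k-2}}{\binom{n-2}{k-2}}\nabla_\theta\log\pi_\theta(y^i|x)\Big]=\mathbb{E}_{y}\big[(k-1)g(y)\nabla_\theta\log\pi_\theta(y|x)\big],$$ and hence $$\mathbb{E}[\hat G]=k\,\mathbb{E}_{y\sim\pi_\theta(\cdot|x)}\Big[\big(R(x,y)P_{\le,\theta}(y)^{k-1}-(k-1)g(y)\big)\nabla_\theta\log\pi_\theta(y\mid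 x)\Big].$$
   Context: $\pi_\theta(\cdot\mid x)$ is a probability distribution on a measurable response space, with density $\pi_\theta(y\mid x)$ with respect to a fixed $\sigma$-finite measure, differentiable in $\theta$; $R(x,y)$ is a bounded real-valued reward, and all expectations involved are assumed finite. For a response $y$, $P_{\le,\theta}(y)=\Pr_{y'\sim\pi_\theta(\cdot|x)}[R(x,y')\le R(x,y)]$, and $g(y)=\mathbb{E}_{y'\sim\pi_\theta(\cdot|x)}\big[R(x,y')\,P_{\le,\theta}(y')^{k-2}\,\mathbf 1\{R(x,y')<R(x,y)\}\big]$. Binomial coefficients use $\binom{p}{q}=0$ for $q>p$ or $q<0$. *)

theory Defs
  imports "HOL-Probability.Probability"
begin

definition policy :: "'a measure \<Rightarrow> ('p \<Rightarrow> 'x \<Rightarrow> 'a \<Rightarrow> real) \<Rightarrow> 'p \<Rightarrow> 'x \<Rightarrow> 'a measure" where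
  "policy M p \<theta> x = density M (\<lambda>y. ennreal (p \<theta> x y))"

definition P_le :: "'a measure \<Rightarrow> ('a \<Rightarrow> real) \<Rightarrow> 'a \<Rightarrow> real" where
  "P_le P r y = measure P {y' \<in> space P. r y' \<le> r y}"

definition g_fun :: "'a measure \<Rightarrow> ('a \<Rightarrow> real) \<Rightarrow> nat \<Rightarrow> 'a \<Rightarrow> real" where
  "g_fun P r k y = (\<integral>y'. r y' * P_le P r y' ^ (k - 2) * indicator {y''. r y'' < r y} y' \<partial>P)"

text \<open>Order statistics: the samples omega 0, ..., omega (n-1) relabeled so that their
  r-values are increasing; 1-based: ordered_sample r n omega i = y^i for 1 <= i <= n.\<close>
definition ordered_sample :: "('a \<Rightarrow> real) \<Rightarrow> nat \<Rightarrow> (nat \<Rightarrow> 'a) \<Rightarrow> nat \<Rightarrow> 'a" where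
  "ordered_sample r n \<omega> i = sort_key r (map \<omega> [0..<n]) ! (i - 1)"

definition term1 :: "('a \<Rightarrow> real) \<Rightarrow> ('a \<Rightarrow> 'p::real_vector) \<Rightarrow> nat \<Rightarrow> nat \<Rightarrow> (nat \<Rightarrow> 'a) \<Rightarrow> 'p" where
  "term1 r s n k \<omega> = (1 / real n) *\<^sub>R (\<Sum>i=1..n.
      (r (ordered_sample r n \<omega> i) * (real ((i - 1) choose (k - 1)) / real ((n - 1) choose (k - 1))))
        *\<^sub>R s (ordered_sample r n \<omega> i))"

definition term2 :: "('a \<Rightarrow> real) \<Rightarrow> ('a \<Rightarrow> 'p::real_vector) \<Rightarrow> nat \<Rightarrow> nat \<Rightarrow> (nat \<Rightarrow> 'a) \<Rightarrow> 'p" where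
  "term2 r s n k \<omega> = (1 / real n) *\<^sub>R (\<Sum>i=1..n.
      ((real k - 1) / (real n - 1) * (\<Sum>j=1..<i. r (ordered_sample r n \<omega> j)
          * (real ((j - 1) choose (k - 2)) / real ((n - 2) choose (k - 2)))))
        *\<^sub>R s (ordered_sample r n \<omega> i))"

definition G_hat :: "('a \<Rightarrow> real) \<Rightarrow> ('a \<Rightarrow> 'p::real_vector) \<Rightarrow> nat \<Rightarrow> nat \<Rightarrow> (nat \<Rightarrow> 'a) \<Rightarrow> 'p" where
  "G_hat r s n k \<omega> = (real k / real n) *\<^sub>R (\<Sum>i=1..n.
      (r (ordered_sample r n \<omega> i) * (real ((i - 1) choose (k - 1)) / real ((n - 1) choose (k - 1)))
       - (real k - 1) / (real n - 1) * (\<Sum>j=1..<i. r (ordered_sample r n \<omega> j)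
          * (real ((j - 1) choose (k - 2)) / real ((n - 2) choose (k - 2)))))
        *\<^sub>R s (ordered_sample r n \<omega> i))"

end

theory Submission
  imports Defs
begin


lemma PiM_integral_insert_rev:
  fixes f :: "_ \<Rightarrow> 'b::{banach,second_countable_topology}"
  assumes Pps: "prob_space P" and J: "finite J" "a \<notin> J"
    and f: "integrable (PiM (insert a J) (\<lambda>_. P)) f"
  shows "integral\<^sup>L (PiM (insert a J) (\<lambda>_. P)) f
       = (\<integral>y. (\<integral>x. f (x(a:=y)) \<partial>PiM J (\<lambda>_. P)) \<partial>P)"
proof -
  interpret product_prob_space "\<lambda>_. P" by (rule product_prob_spaceI) (rule Pps)
  interpret Jf: finite_product_sigma_finite "\<lambda>_. P" J by standard (rule J(1))
  interpret pr: pair_sigma_finite "PiM J (\<lambda>_. P)" P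
    by (simp add: pair_sigma_finite.intro Jf.sigma_finite_measure_axioms sigma_finite_measures)
  have fm[measurable]: "f \<in> borel_measurable (PiM (insert a J) (\<lambda>_. P))" using f by auto
  have int2: "integrable (PiM J (\<lambda>_. P) \<Otimes>\<^sub>M P) (\<lambda>(x,y). f (x(a:=y)))"
  proof (subst integrable_iff_bounded, intro conjI)
    show "(\<lambda>(x,y). f (x(a:=y))) \<in> borel_measurable (PiM J (\<lambda>_. P) \<Otimes>\<^sub>M P)"
      using measurable_add_dim[of a J "\<lambda>_. P"] fm
      by (simp add: measurable_compose[where f="\<lambda>(x,y). x(a:=y)"] split_beta')
    have mm: "(\<lambda>z. ennreal (norm ((\<lambda>(x,y). f (x(a:=y))) z))) \<in> borel_measurable (PiM J (\<lambda>_. P) \<Otimes>\<^sub>M P)"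
      using measurable_add_dim[of a J "\<lambda>_. P"] fm
      by (simp add: measurable_compose[where f="\<lambda>(x,y). x(a:=y)"] split_beta')
    have "(\<integral>\<^sup>+ z. ennreal (norm ((\<lambda>(x,y). f (x(a:=y))) z)) \<partial>(PiM J (\<lambda>_. P) \<Otimes>\<^sub>M P))
        = (\<integral>\<^sup>+ x. \<integral>\<^sup>+ y. ennreal (norm (f (x(a:=y)))) \<partial>P \<partial>PiM J (\<lambda>_. P))"
      using sigma_finite_measure.nn_integral_fst[OF prob_space_imp_sigma_finite[OF Pps] mm] by simp
    also have "\<dots> = (\<integral>\<^sup>+ z. ennreal (norm (f z)) \<partial>PiM (insert a J) (\<lambda>_. P))"
      by (rule product_nn_integral_insert[symmetric]) (use J in auto)
    also have "\<dots> < \<infinity>" using f by (simp add: integrable_iff_bounded)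
    finally show "(\<integral>\<^sup>+ z. ennreal (norm ((\<lambda>(x,y). f (x(a:=y))) z)) \<partial>(PiM J (\<lambda>_. P) \<Otimes>\<^sub>M P)) < \<infinity>" .
  qed
  have "integral\<^sup>L (PiM (insert a J) (\<lambda>_. P)) f = (\<integral>x. (\<integral>y. f (x(a:=y)) \<partial>P) \<partial>PiM J (\<lambda>_. P))"
    by (rule product_integral_insert) (use J f in auto)
  also have "\<dots> = (\<integral>y. (\<integral>x. f (x(a:=y)) \<partial>PiM J (\<lambda>_. P)) \<partial>P)"
    by (rule pr.Fubini_integral[symmetric]) (use int2 in simp)
  finally show ?thesis .
qed

lemma PiM_center:
  fixes V :: "'a \<Rightarrow> 'b::{banach,second_countable_topology}"
  assumes Pps: "prob_space P" and I: "finite I" "a \<in> I" and S: "S \<subseteq> I - {a}"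
    and qm[measurable]: "(\<lambda>z. q (fst z) (snd z)) \<in> borel_measurable (P \<Otimes>\<^sub>M P)"
    and q01: "\<And>y y'. 0 \<le> q y y' \<and> q y y' \<le> 1"
    and Vm[measurable]: "V \<in> borel_measurable P"
    and Vi: "integrable P (\<lambda>y. (\<integral>y'. q y y' \<partial>P) ^ card S *\<^sub>R V y)"
  shows "integrable (PiM I (\<lambda>_. P)) (\<lambda>\<omega>. (\<Prod>b\<in>S. q (\<omega> a) (\<omega> b)) *\<^sub>R V (\<omega> a))"
    and "(\<integral>\<omega>. (\<Prod>b\<in>S. q (\<omega> a) (\<omega> b)) *\<^sub>R V (\<omega> a) \<partial>PiM I (\<lambda>_. P))
        = (\<integral>y. (\<integral>y'. q y y' \<partial>P) ^ card S *\<^sub>R V y \<partial>P)"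
proof -
  interpret product_prob_space "\<lambda>_. P" by (rule product_prob_spaceI) (rule Pps)
  have finP: "finite_measure P" using Pps by (simp add: prob_space_def)
  define J where "J = I - {a}"
  have J: "finite J" "a \<notin> J" "I = insert a J" using I by (auto simp: J_def)
  have SJ: "S \<subseteq> J" using S by (auto simp: J_def)
  have qm1[measurable]: "q y \<in> borel_measurable P" if "y \<in> space P" for y
    using measurable_Pair2[OF qm that] by simp
  have qint: "integrable P (q y)" if "y \<in> space P" for y
    by (rule finite_measure.integrable_const_bound[OF finP, where B=1]) (use q01 qm1[OF that] in auto)
  have fm: "(\<lambda>\<omega>. (\<Prod>b\<in>S. q (\<omega> a) (\<omega> b)) *\<^sub>R V (\<omega> a)) \<in> borel_measurable (PiM I (\<lambda>_. P))"
  proof -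
    have "(\<lambda>\<omega>. q (\<omega> a) (\<omega> b)) \<in> borel_measurable (PiM I (\<lambda>_. P))" if "b \<in> S" for b
    proof -
      have "(\<lambda>\<omega>. (\<omega> a, \<omega> b)) \<in> measurable (PiM I (\<lambda>_. P)) (P \<Otimes>\<^sub>M P)"
        using that S I by (intro measurable_Pair) auto
      from measurable_compose[OF this qm] show ?thesis by simp
    qed
    moreover have "(\<lambda>\<omega>. V (\<omega> a)) \<in> borel_measurable (PiM I (\<lambda>_. P))"
      using I by measurable
    ultimately show ?thesis by (intro borel_measurable_scaleR borel_measurable_prod) auto
  qed
  have prodeq: "(\<Prod>b\<in>S. q y (x b)) = (\<Prod>b\<in>J. (if b \<in> S then q y else (\<lambda>_. 1)) (x b))" for y x
    by (rule prod.mono_neutral_cong_left[OF J(1) SJ]) auto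
  have nn1: "(\<integral>\<^sup>+ z. ennreal ((if b \<in> S then q y else (\<lambda>_. 1)) z) \<partial>P)
        = ennreal (if b \<in> S then (\<integral>y'. q y y' \<partial>P) else 1)" if y: "y \<in> space P" for y b
  proof (cases "b \<in> S")
    case True
    then show ?thesis using qint[OF y] q01 by (simp add: nn_integral_eq_integral)
  next
    case False
    then show ?thesis using prob_space.emeasure_space_1[OF Pps] by simp
  qed
  have inner_nn: "(\<integral>\<^sup>+ x. ennreal (\<Prod>b\<in>S. q y (x b)) \<partial>PiM J (\<lambda>_. P))
        = ennreal ((\<integral>y'. q y y' \<partial>P) ^ card S)" if y: "y \<in> space P" for y
  proof -
    have "(\<integral>\<^sup>+ x. ennreal (\<Prod>b\<in>S. q y (x b)) \<partial>PiM J (\<lambda>_. P))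
        = (\<integral>\<^sup>+ x. (\<Prod>b\<in>J. (\<lambda>z. ennreal ((if b \<in> S then q y else (\<lambda>_. 1)) z)) (x b)) \<partial>PiM J (\<lambda>_. P))"
      by (intro nn_integral_cong) (simp add: prodeq prod_ennreal q01 prod_nonneg)
    also have "\<dots> = (\<Prod>b\<in>J. (\<integral>\<^sup>+ z. ennreal ((if b \<in> S then q y else (\<lambda>_. 1)) z) \<partial>P))"
      by (rule product_nn_integral_prod) (use J(1) qm1[OF y] in auto)
    also have "\<dots> = (\<Prod>b\<in>J. ennreal (if b \<in> S then (\<integral>y'. q y y' \<partial>P) else 1))"
      using nn1[OF y] by simp
    also have "\<dots> = ennreal (\<Prod>b\<in>J. (if b \<in> S then (\<integral>y'. q y y' \<partial>P) else 1))"
      by (rule prod_ennreal) (use q01 in \<open>auto intro: integral_nonneg\<close>)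
    also have "(\<Prod>b\<in>J. (if b \<in> S then (\<integral>y'. q y y' \<partial>P) else 1)) = (\<integral>y'. q y y' \<partial>P) ^ card S"
      by (subst prod.mono_neutral_cong_left[OF J(1) SJ, symmetric]) auto
    finally show ?thesis .
  qed
  have inner_L: "(\<integral>x. (\<Prod>b\<in>S. q y (x b)) \<partial>PiM J (\<lambda>_. P))
        = (\<integral>y'. q y y' \<partial>P) ^ card S" if y: "y \<in> space P" for y
  proof -
    have "(\<integral>x. (\<Prod>b\<in>S. q y (x b)) \<partial>PiM J (\<lambda>_. P))
        = (\<integral>x. (\<Prod>b\<in>J. (if b \<in> S then q y else (\<lambda>_. 1)) (x b)) \<partial>PiM J (\<lambda>_. P))"
      by (simp add: prodeq)
    also have "\<dots> = (\<Prod>b\<in>J. integral\<^sup>L P (if b \<in> S then q y else (\<lambda>_. 1)))"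
      by (rule product_integral_prod) (use J(1) qint[OF y] in auto)
    also have "\<dots> = (\<Prod>b\<in>J. (if b \<in> S then (\<integral>y'. q y y' \<partial>P) else 1))"
      by (intro prod.cong) (auto simp: prob_space.prob_space[OF Pps])
    also have "\<dots> = (\<integral>y'. q y y' \<partial>P) ^ card S"
      by (subst prod.mono_neutral_cong_left[OF J(1) SJ, symmetric]) auto
    finally show ?thesis .
  qed
  have upd: "(\<Prod>b\<in>S. q ((x(a:=y)) a) ((x(a:=y)) b)) = (\<Prod>b\<in>S. q y (x b))" for x y
    using SJ J(2) by (intro prod.cong) auto
  have upd2: "(\<Prod>b\<in>S. q y (if b = a then y else x b)) = (\<Prod>b\<in>S. q y (x b))" for x y
    using SJ J(2) by (intro prod.cong) auto
  have fm': "(\<lambda>\<omega>. (\<Prod>b\<in>S. q (\<omega> a) (\<omega> b)) *\<^sub>R V (\<omega> a)) \<in> borel_measurable (PiM (insert a J) (\<lambda>_. P))"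
    using fm J(3) by simp
  have "(\<integral>\<^sup>+ \<omega>. ennreal (norm ((\<Prod>b\<in>S. q (\<omega> a) (\<omega> b)) *\<^sub>R V (\<omega> a))) \<partial>PiM I (\<lambda>_. P))
      = (\<integral>\<^sup>+ y. (\<integral>\<^sup>+ x. ennreal (norm ((\<Prod>b\<in>S. q ((x(a:=y)) a) ((x(a:=y)) b)) *\<^sub>R V ((x(a:=y)) a))) \<partial>PiM J (\<lambda>_. P)) \<partial>P)"
    unfolding J(3) by (rule product_nn_integral_insert_rev) (use J measurable_compose[OF measurable_compose[OF fm' borel_measurable_norm] measurable_ennreal] in auto)
  also have "\<dots> = (\<integral>\<^sup>+ y. (\<integral>\<^sup>+ x. ennreal (norm (V y)) * ennreal (\<Prod>b\<in>S. q y (x b)) \<partial>PiM J (\<lambda>_. P)) \<partial>P)"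
    by (intro nn_integral_cong) (simp add: upd upd2 q01 prod_nonneg ennreal_mult' mult.commute)
  also have "\<dots> = (\<integral>\<^sup>+ y. ennreal (norm (V y)) * ennreal ((\<integral>y'. q y y' \<partial>P) ^ card S) \<partial>P)"
  proof (intro nn_integral_cong)
    fix y assume y: "y \<in> space P"
    have "(\<lambda>x. ennreal (\<Prod>b\<in>S. q y (x b))) \<in> borel_measurable (PiM J (\<lambda>_. P))"
      using SJ qm1[OF y] by measurable (use SJ in auto)
    then show "(\<integral>\<^sup>+ x. ennreal (norm (V y)) * ennreal (\<Prod>b\<in>S. q y (x b)) \<partial>PiM J (\<lambda>_. P))
        = ennreal (norm (V y)) * ennreal ((\<integral>y'. q y y' \<partial>P) ^ card S)"
      by (simp add: nn_integral_cmult inner_nn[OF y])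
  qed
  also have "\<dots> = (\<integral>\<^sup>+ y. ennreal (norm ((\<integral>y'. q y y' \<partial>P) ^ card S *\<^sub>R V y)) \<partial>P)"
    by (intro nn_integral_cong) (simp add: ennreal_mult'[symmetric] q01 integral_nonneg mult.commute)
  also have "\<dots> < \<infinity>" using Vi by (simp add: integrable_iff_bounded)
  finally show fi: "integrable (PiM I (\<lambda>_. P)) (\<lambda>\<omega>. (\<Prod>b\<in>S. q (\<omega> a) (\<omega> b)) *\<^sub>R V (\<omega> a))"
    using fm by (simp add: integrable_iff_bounded)
  have "(\<integral>\<omega>. (\<Prod>b\<in>S. q (\<omega> a) (\<omega> b)) *\<^sub>R V (\<omega> a) \<partial>PiM I (\<lambda>_. P))
     = (\<integral>y. (\<integral>x. (\<Prod>b\<in>S. q ((x(a:=y)) a) ((x(a:=y)) b)) *\<^sub>R V ((x(a:=y)) a) \<partial>PiM J (\<lambda>_. P)) \<partial>P)"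
    unfolding J(3) by (rule PiM_integral_insert_rev[OF Pps J(1,2)]) (use fi J(3) in simp)
  also have "\<dots> = (\<integral>y. (\<integral>x. (\<Prod>b\<in>S. q y (x b)) \<partial>PiM J (\<lambda>_. P)) *\<^sub>R V y \<partial>P)"
  proof (rule Bochner_Integration.integral_cong[OF refl])
    fix y assume y: "y \<in> space P"
    have "integrable (PiM J (\<lambda>_. P)) (\<lambda>x. (\<Prod>b\<in>S. q y (x b)))"
    proof (rule finite_measure.integrable_const_bound[where B=1])
      show "finite_measure (PiM J (\<lambda>_. P))"
        using prob_space_PiM[of J "\<lambda>_. P"] Pps by (simp add: prob_space_def)
      show "AE x in PiM J (\<lambda>_. P). norm (\<Prod>b\<in>S. q y (x b)) \<le> 1"
        using q01 by (auto simp: abs_prod intro!: prod_le_1)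
      show "(\<lambda>x. (\<Prod>b\<in>S. q y (x b))) \<in> borel_measurable (PiM J (\<lambda>_. P))"
        using SJ qm1[OF y] by measurable (use SJ in auto)
    qed
    then show "(\<integral>x. (\<Prod>b\<in>S. q ((x(a:=y)) a) ((x(a:=y)) b)) *\<^sub>R V ((x(a:=y)) a) \<partial>PiM J (\<lambda>_. P))
        = (\<integral>x. (\<Prod>b\<in>S. q y (x b)) \<partial>PiM J (\<lambda>_. P)) *\<^sub>R V y"
      by (simp add: upd upd2)
  qed
  also have "\<dots> = (\<integral>y. (\<integral>y'. q y y' \<partial>P) ^ card S *\<^sub>R V y \<partial>P)"
    by (intro Bochner_Integration.integral_cong) (simp_all add: inner_L)
  finally show "(\<integral>\<omega>. (\<Prod>b\<in>S. q (\<omega> a) (\<omega> b)) *\<^sub>R V (\<omega> a) \<partial>PiM I (\<lambda>_. P))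
        = (\<integral>y. (\<integral>y'. q y y' \<partial>P) ^ card S *\<^sub>R V y \<partial>P)" .
qed

lemma PiM_pair_meas:
  assumes hm: "(\<lambda>z. h (fst z) (snd z)) \<in> borel_measurable (P \<Otimes>\<^sub>M P)" and "i \<in> I" "j \<in> I"
  shows "(\<lambda>\<omega>. h (\<omega> i) (\<omega> j)) \<in> borel_measurable (PiM I (\<lambda>_. P))"
proof -
  have "(\<lambda>\<omega>. (\<omega> i, \<omega> j)) \<in> measurable (PiM I (\<lambda>_. P)) (P \<Otimes>\<^sub>M P)"
    using assms by (intro measurable_Pair) auto
  from measurable_compose[OF this hm] show ?thesis by simp
qed

lemma PiM_center2:
  fixes Vv :: "'a \<Rightarrow> 'b::{banach,second_countable_topology}"
  assumes Pps: "prob_space P" and I: "finite I" "a \<in> I" "b \<in> I" "b \<noteq> a" and T: "T \<subseteq> I - {a, b}"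
    and qm[measurable]: "(\<lambda>z. q (fst z) (snd z)) \<in> borel_measurable (P \<Otimes>\<^sub>M P)"
    and q01: "\<And>y y'. 0 \<le> q y y' \<and> q y y' \<le> 1"
    and Wm[measurable]: "(\<lambda>z. W (fst z) (snd z)) \<in> borel_measurable (P \<Otimes>\<^sub>M P)"
    and Wb: "\<And>y y'. \<bar>W y y'\<bar> \<le> B"
    and Vm[measurable]: "Vv \<in> borel_measurable P"
    and Vi: "integrable P (\<lambda>y. (\<integral>y'. (\<integral>z. q y' z \<partial>P) ^ card T * \<bar>W y y'\<bar> \<partial>P) *\<^sub>R Vv y)"
  shows "integrable (PiM I (\<lambda>_. P)) (\<lambda>\<omega>. ((\<Prod>c\<in>T. q (\<omega> b) (\<omega> c)) * W (\<omega> a) (\<omega> b)) *\<^sub>R Vv (\<omega> a))"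
    and "(\<integral>\<omega>. ((\<Prod>c\<in>T. q (\<omega> b) (\<omega> c)) * W (\<omega> a) (\<omega> b)) *\<^sub>R Vv (\<omega> a) \<partial>PiM I (\<lambda>_. P))
        = (\<integral>y. (\<integral>y'. (\<integral>z. q y' z \<partial>P) ^ card T * W y y' \<partial>P) *\<^sub>R Vv y \<partial>P)"
proof -
  interpret product_prob_space "\<lambda>_. P" by (rule product_prob_spaceI) (rule Pps)
  have finP: "finite_measure P" using Pps by (simp add: prob_space_def)
  define J where "J = I - {a}"
  have J: "finite J" "a \<notin> J" "I = insert a J" "b \<in> J" "T \<subseteq> J - {b}" using I T by (auto simp: J_def)
  have Qm[measurable]: "(\<lambda>y'. (\<integral>z. q y' z \<partial>P)) \<in> borel_measurable P"
    using prob_space_imp_sigma_finite[OF Pps]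
    by (intro sigma_finite_measure.borel_measurable_lebesgue_integral) (auto simp: split_beta')
  have Q01: "0 \<le> (\<integral>z. q y' z \<partial>P) \<and> (\<integral>z. q y' z \<partial>P) \<le> 1" if "y' \<in> space P" for y'
  proof -
    have qi: "integrable P (q y')"
      by (rule finite_measure.integrable_const_bound[OF finP, where B=1])
         (use q01 measurable_Pair2[OF qm that] in auto)
    have "(\<integral>z. q y' z \<partial>P) \<le> (\<integral>z. 1 \<partial>P)"
      by (rule integral_mono[OF qi]) (use q01 prob_space.prob_space[OF Pps] in auto)
    then show ?thesis using q01 prob_space.prob_space[OF Pps] by (auto intro: integral_nonneg)
  qed
  have Wm1[measurable]: "W y \<in> borel_measurable P" if "y \<in> space P" for y
    using measurable_Pair2[OF Wm that] by simp
  have Wi: "integrable P (\<lambda>y'. (\<integral>z. q y' z \<partial>P) ^ card T *\<^sub>R W y y')"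
       "integrable P (\<lambda>y'. (\<integral>z. q y' z \<partial>P) ^ card T *\<^sub>R \<bar>W y y'\<bar>)" if y: "y \<in> space P" for y
  proof -
    have b: "\<bar>(\<integral>z. q y' z \<partial>P) ^ card T * W y y'\<bar> \<le> B" if "y' \<in> space P" for y'
    proof -
      have "\<bar>(\<integral>z. q y' z \<partial>P) ^ card T * W y y'\<bar> = \<bar>(\<integral>z. q y' z \<partial>P)\<bar> ^ card T * \<bar>W y y'\<bar>"
        by (simp add: abs_mult power_abs)
      also have "\<dots> \<le> 1 * B" using Q01[OF that] Wb
        by (intro mult_mono) (auto intro: power_le_one)
      finally show ?thesis by simp
    qed
    show "integrable P (\<lambda>y'. (\<integral>z. q y' z \<partial>P) ^ card T *\<^sub>R W y y')"
      by (rule finite_measure.integrable_const_bound[OF finP, where B=B]) (use b Wm1[OF y] in auto)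
    show "integrable P (\<lambda>y'. (\<integral>z. q y' z \<partial>P) ^ card T *\<^sub>R \<bar>W y y'\<bar>)"
      by (rule finite_measure.integrable_const_bound[OF finP, where B=B]) (use b Wm1[OF y] in \<open>auto simp: abs_mult\<close>)
  qed
  have Wabsm: "(\<lambda>z. \<bar>W (fst z) (snd z)\<bar>) \<in> borel_measurable (P \<Otimes>\<^sub>M P)" by measurable
  have inner1: "integrable (PiM J (\<lambda>_. P)) (\<lambda>x. (\<Prod>c\<in>T. q (x b) (x c)) * W y (x b))"
     "(\<integral>x. (\<Prod>c\<in>T. q (x b) (x c)) * W y (x b) \<partial>PiM J (\<lambda>_. P))
        = (\<integral>y'. (\<integral>z. q y' z \<partial>P) ^ card T * W y y' \<partial>P)" if y: "y \<in> space P" for y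
    using PiM_center[OF Pps J(1) J(4) J(5) qm q01 Wm1[OF y] Wi(1)[OF y]] by simp_all
  have Wabsm1: "(\<lambda>y'. \<bar>W y y'\<bar>) \<in> borel_measurable P" if "y \<in> space P" for y
    using Wm1[OF that] by measurable
  have inner2: "integrable (PiM J (\<lambda>_. P)) (\<lambda>x. (\<Prod>c\<in>T. q (x b) (x c)) * \<bar>W y (x b)\<bar>)"
     "(\<integral>x. (\<Prod>c\<in>T. q (x b) (x c)) * \<bar>W y (x b)\<bar> \<partial>PiM J (\<lambda>_. P))
        = (\<integral>y'. (\<integral>z. q y' z \<partial>P) ^ card T * \<bar>W y y'\<bar> \<partial>P)" if y: "y \<in> space P" for y
    using PiM_center[OF Pps J(1) J(4) J(5) qm q01 Wabsm1[OF y] Wi(2)[OF y]] by simp_all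
  have upd: "(\<Prod>c\<in>T. q ((x(a:=y)) b) ((x(a:=y)) c)) = (\<Prod>c\<in>T. q (x b) (x c))"
    "(\<Prod>c\<in>T. q (if b = a then y else x b) (if c = a then y else x c)) = (\<Prod>c\<in>T. q (x b) (x c))"
    "(\<Prod>c\<in>T. q (x b) (if c = a then y else x c)) = (\<Prod>c\<in>T. q (x b) (x c))" for x y
    using J by (auto intro!: prod.cong)
  have fm: "(\<lambda>\<omega>. ((\<Prod>c\<in>T. q (\<omega> b) (\<omega> c)) * W (\<omega> a) (\<omega> b)) *\<^sub>R Vv (\<omega> a)) \<in> borel_measurable (PiM I (\<lambda>_. P))"
  proof -
    have "(\<lambda>\<omega>. q (\<omega> b) (\<omega> c)) \<in> borel_measurable (PiM I (\<lambda>_. P))" if "c \<in> T" for c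
      using PiM_pair_meas[OF qm, of b I c] that I T by auto
    moreover have "(\<lambda>\<omega>. W (\<omega> a) (\<omega> b)) \<in> borel_measurable (PiM I (\<lambda>_. P))"
      using PiM_pair_meas[OF Wm, of a I b] I by auto
    moreover have "(\<lambda>\<omega>. Vv (\<omega> a)) \<in> borel_measurable (PiM I (\<lambda>_. P))"
      using I by measurable
    ultimately show ?thesis by (intro borel_measurable_scaleR borel_measurable_times borel_measurable_prod) auto
  qed
  have fm': "(\<lambda>\<omega>. ennreal (norm (((\<Prod>c\<in>T. q (\<omega> b) (\<omega> c)) * W (\<omega> a) (\<omega> b)) *\<^sub>R Vv (\<omega> a)))) \<in> borel_measurable (PiM (insert a J) (\<lambda>_. P))"
    using measurable_compose[OF measurable_compose[OF fm borel_measurable_norm] measurable_ennreal] J(3) by simp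
  have "(\<integral>\<^sup>+ \<omega>. ennreal (norm (((\<Prod>c\<in>T. q (\<omega> b) (\<omega> c)) * W (\<omega> a) (\<omega> b)) *\<^sub>R Vv (\<omega> a))) \<partial>PiM I (\<lambda>_. P))
      = (\<integral>\<^sup>+ y. (\<integral>\<^sup>+ x. ennreal (norm (((\<Prod>c\<in>T. q ((x(a:=y)) b) ((x(a:=y)) c)) * W ((x(a:=y)) a) ((x(a:=y)) b)) *\<^sub>R Vv ((x(a:=y)) a))) \<partial>PiM J (\<lambda>_. P)) \<partial>P)"
    unfolding J(3) by (rule product_nn_integral_insert_rev) (use J fm' in auto)
  also have "\<dots> = (\<integral>\<^sup>+ y. (\<integral>\<^sup>+ x. ennreal (norm (Vv y)) * ennreal ((\<Prod>c\<in>T. q (x b) (x c)) * \<bar>W y (x b)\<bar>) \<partial>PiM J (\<lambda>_. P)) \<partial>P)"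
    using J(2,4) by (intro nn_integral_cong) (auto simp: upd q01 prod_nonneg ennreal_mult'[symmetric] abs_mult abs_prod mult.commute)
  also have "\<dots> = (\<integral>\<^sup>+ y. ennreal (norm (Vv y)) * ennreal (\<integral>y'. (\<integral>z. q y' z \<partial>P) ^ card T * \<bar>W y y'\<bar> \<partial>P) \<partial>P)"
  proof (intro nn_integral_cong)
    fix y assume y: "y \<in> space P"
    have "(\<integral>\<^sup>+ x. ennreal ((\<Prod>c\<in>T. q (x b) (x c)) * \<bar>W y (x b)\<bar>) \<partial>PiM J (\<lambda>_. P))
        = ennreal (\<integral>y'. (\<integral>z. q y' z \<partial>P) ^ card T * \<bar>W y y'\<bar> \<partial>P)"
      by (subst nn_integral_eq_integral[OF inner2(1)[OF y]]) (auto simp: inner2(2)[OF y] q01 prod_nonneg)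
    moreover have "(\<lambda>x. ennreal ((\<Prod>c\<in>T. q (x b) (x c)) * \<bar>W y (x b)\<bar>)) \<in> borel_measurable (PiM J (\<lambda>_. P))"
      using inner2(1)[OF y] by (intro measurable_compose[OF _ measurable_ennreal]) auto
    ultimately show "(\<integral>\<^sup>+ x. ennreal (norm (Vv y)) * ennreal ((\<Prod>c\<in>T. q (x b) (x c)) * \<bar>W y (x b)\<bar>) \<partial>PiM J (\<lambda>_. P))
        = ennreal (norm (Vv y)) * ennreal (\<integral>y'. (\<integral>z. q y' z \<partial>P) ^ card T * \<bar>W y y'\<bar> \<partial>P)"
      by (simp add: nn_integral_cmult)
  qed
  also have "\<dots> = (\<integral>\<^sup>+ y. ennreal (norm ((\<integral>y'. (\<integral>z. q y' z \<partial>P) ^ card T * \<bar>W y y'\<bar> \<partial>P) *\<^sub>R Vv y)) \<partial>P)"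
  proof (intro nn_integral_cong)
    fix y assume y: "y \<in> space P"
    have "0 \<le> (\<integral>y'. (\<integral>z. q y' z \<partial>P) ^ card T * \<bar>W y y'\<bar> \<partial>P)"
      using Q01 by (intro Bochner_Integration.integral_nonneg) auto
    then show "ennreal (norm (Vv y)) * ennreal (\<integral>y'. (\<integral>z. q y' z \<partial>P) ^ card T * \<bar>W y y'\<bar> \<partial>P)
        = ennreal (norm ((\<integral>y'. (\<integral>z. q y' z \<partial>P) ^ card T * \<bar>W y y'\<bar> \<partial>P) *\<^sub>R Vv y))"
      by (simp add: ennreal_mult'[symmetric] mult.commute)
  qed
  also have "\<dots> < \<infinity>" using Vi by (simp add: integrable_iff_bounded)
  finally show fi: "integrable (PiM I (\<lambda>_. P)) (\<lambda>\<omega>. ((\<Prod>c\<in>T. q (\<omega> b) (\<omega> c)) * W (\<omega> a) (\<omega> b)) *\<^sub>R Vv (\<omega> a))"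
    using fm by (simp add: integrable_iff_bounded)
  have "(\<integral>\<omega>. ((\<Prod>c\<in>T. q (\<omega> b) (\<omega> c)) * W (\<omega> a) (\<omega> b)) *\<^sub>R Vv (\<omega> a) \<partial>PiM I (\<lambda>_. P))
     = (\<integral>y. (\<integral>x. ((\<Prod>c\<in>T. q ((x(a:=y)) b) ((x(a:=y)) c)) * W ((x(a:=y)) a) ((x(a:=y)) b)) *\<^sub>R Vv ((x(a:=y)) a) \<partial>PiM J (\<lambda>_. P)) \<partial>P)"
    unfolding J(3) by (rule PiM_integral_insert_rev[OF Pps J(1,2)]) (use fi J(3) in simp)
  also have "\<dots> = (\<integral>y. (\<integral>x. (\<Prod>c\<in>T. q (x b) (x c)) * W y (x b) \<partial>PiM J (\<lambda>_. P)) *\<^sub>R Vv y \<partial>P)"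
  proof (rule Bochner_Integration.integral_cong[OF refl])
    fix y assume y: "y \<in> space P"
    show "(\<integral>x. ((\<Prod>c\<in>T. q ((x(a:=y)) b) ((x(a:=y)) c)) * W ((x(a:=y)) a) ((x(a:=y)) b)) *\<^sub>R Vv ((x(a:=y)) a) \<partial>PiM J (\<lambda>_. P))
        = (\<integral>x. (\<Prod>c\<in>T. q (x b) (x c)) * W y (x b) \<partial>PiM J (\<lambda>_. P)) *\<^sub>R Vv y"
      using inner1(1)[OF y] I(4) by (simp add: upd)
  qed
  also have "\<dots> = (\<integral>y. (\<integral>y'. (\<integral>z. q y' z \<partial>P) ^ card T * W y y' \<partial>P) *\<^sub>R Vv y \<partial>P)"
    by (intro Bochner_Integration.integral_cong) (simp_all add: inner1(2))
  finally show "(\<integral>\<omega>. ((\<Prod>c\<in>T. q (\<omega> b) (\<omega> c)) * W (\<omega> a) (\<omega> b)) *\<^sub>R Vv (\<omega> a) \<partial>PiM I (\<lambda>_. P))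
        = (\<integral>y. (\<integral>y'. (\<integral>z. q y' z \<partial>P) ^ card T * W y y' \<partial>P) *\<^sub>R Vv y \<partial>P)" .
qed



lemma sum_subsets_prod_indicator:
  assumes "finite J"
  shows "(\<Sum>T\<in>{T. T \<subseteq> J \<and> card T = m}. \<Prod>b\<in>T. (if Q b then 1 else 0 :: real))
       = real (card {b\<in>J. Q b} choose m)"
proof -
  have fin: "finite {T. T \<subseteq> J \<and> card T = m}" using assms by simp
  have "(\<Sum>T\<in>{T. T \<subseteq> J \<and> card T = m}. \<Prod>b\<in>T. (if Q b then 1 else 0 :: real))
      = (\<Sum>T\<in>{T. T \<subseteq> J \<and> card T = m}. (if T \<subseteq> {b. Q b} then 1 else 0 :: real))"
  proof (intro sum.cong refl)
    fix T assume "T \<in> {T. T \<subseteq> J \<and> card T = m}"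
    then have fT: "finite T" using assms finite_subset by auto
    show "(\<Prod>b\<in>T. (if Q b then 1 else 0 :: real)) = (if T \<subseteq> {b. Q b} then 1 else 0)"
      using fT by (induction T rule: finite_induct) auto
  qed
  also have "\<dots> = real (card {T. T \<subseteq> J \<and> card T = m \<and> T \<subseteq> {b. Q b}})"
    using fin by (simp add: sum.If_cases Int_def conj_assoc)
  also have "{T. T \<subseteq> J \<and> card T = m \<and> T \<subseteq> {b. Q b}} = {T. T \<subseteq> {b\<in>J. Q b} \<and> card T = m}"
    by auto
  also have "card \<dots> = card {b\<in>J. Q b} choose m"
    using assms by (intro n_subsets) simp
  finally show ?thesis .
qed

lemma card_subsets_eq: "finite J \<Longrightarrow> card {T. T \<subseteq> J \<and> card T = m} = card J choose m"
  by (rule n_subsets)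

lemma strict_sorted_nth_less_iff:
  fixes xs :: "real list"
  assumes "sorted_wrt (<) xs" "i < length xs" "j < length xs"
  shows "xs ! i < xs ! j \<longleftrightarrow> i < j"
proof
  assume "xs ! i < xs ! j"
  show "i < j"
  proof (rule ccontr)
    assume "\<not> i < j"
    then have "j \<le> i" by simp
    then have "xs ! j \<le> xs ! i"
      using assms by (metis sorted_nth_mono strict_sorted_iff)
    with \<open>xs ! i < xs ! j\<close> show False by simp
  qed
next
  assume "i < j" then show "xs ! i < xs ! j" using assms sorted_wrt_nth_less by blast
qed

lemma strict_sorted_count_below:
  fixes xs :: "real list"
  assumes "sorted_wrt (<) xs" "j < length xs"
  shows "length (filter (\<lambda>v. v < xs ! j) xs) = j"
proof -
  have "length (filter (\<lambda>v. v < xs ! j) xs) = card {i. i < length xs \<and> xs ! i < xs ! j}"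
    by (rule length_filter_conv_card)
  also have "{i. i < length xs \<and> xs ! i < xs ! j} = {..<j}"
    using assms strict_sorted_nth_less_iff[OF assms(1) _ assms(2)] by auto
  finally show ?thesis by simp
qed

lemma ordered_sample_reindex:
  fixes r :: "'a \<Rightarrow> real" and H :: "nat \<Rightarrow> 'a \<Rightarrow> 'b::comm_monoid_add"
  assumes inj: "inj_on (\<lambda>i. r (\<omega> i)) {..<n}"
  shows "(\<Sum>i=1..n. H i (ordered_sample r n \<omega> i))
       = (\<Sum>a<n. H (card {b\<in>{..<n}. r (\<omega> b) < r (\<omega> a)} + 1) (\<omega> a))"
proof -
  define L where "L = sort_key r (map \<omega> [0..<n])"
  define \<sigma> where "\<sigma> a = card {b\<in>{..<n}. r (\<omega> b) < r (\<omega> a)}" for a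
  have lenL: "length L = n" by (simp add: L_def)
  have msetL: "mset L = mset (map \<omega> [0..<n])" by (simp add: L_def)
  have "distinct (map r (map \<omega> [0..<n]))"
    using inj by (simp add: distinct_map comp_def lessThan_atLeast0)
  moreover have "mset (map r L) = mset (map r (map \<omega> [0..<n]))"
    using msetL by (metis mset_map)
  ultimately have dL: "distinct (map r L)"
    using mset_eq_imp_distinct_iff by metis
  have sL: "sorted (map r L)" by (simp add: L_def)
  have ssL: "sorted_wrt (<) (map r L)" using dL sL strict_sorted_iff by blast
  have key: "\<sigma> a < n \<and> L ! (\<sigma> a) = \<omega> a" if a: "a < n" for a
  proof -
    have "\<omega> a \<in> set L" using msetL a by (metis atLeastLessThan_iff image_eqI le0 set_map set_mset_mset set_upt)
    then obtain j where j: "j < n" "L ! j = \<omega> a" using lenL by (metis in_set_conv_nth)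
    have "\<sigma> a = card {i. i < length (map r (map \<omega> [0..<n])) \<and> (map r (map \<omega> [0..<n])) ! i < r (\<omega> a)}"
      unfolding \<sigma>_def by (intro arg_cong[where f=card]) auto
    also have "\<dots> = length (filter (\<lambda>v. v < r (\<omega> a)) (map r (map \<omega> [0..<n])))"
      by (rule length_filter_conv_card[symmetric])
    also have "\<dots> = length (filter (\<lambda>v. v < r (\<omega> a)) (map r L))"
      using \<open>mset (map r L) = _\<close> by (metis mset_filter size_mset)
    also have "\<dots> = length (filter (\<lambda>v. v < (map r L) ! j) (map r L))"
      using j lenL by simp
    also have "\<dots> = j" using strict_sorted_count_below[OF ssL, of j] j lenL by simp
    finally show ?thesis using j by simp
  qed
  have inj\<sigma>: "inj_on \<sigma> {..<n}"
  proof (rule inj_onI)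
    fix a b assume "a \<in> {..<n}" "b \<in> {..<n}" "\<sigma> a = \<sigma> b"
    then have "\<omega> a = \<omega> b" using key by (metis lessThan_iff)
    then show "a = b" using inj \<open>a \<in> _\<close> \<open>b \<in> _\<close> by (metis (no_types, lifting) inj_onD)
  qed
  have bij: "bij_betw \<sigma> {..<n} {..<n}"
    using endo_inj_surj[of "{..<n}" \<sigma>] key inj\<sigma> by (auto simp: bij_betw_def)
  have "(\<Sum>i=1..n. H i (ordered_sample r n \<omega> i)) = (\<Sum>i<n. H (i+1) (L ! i))"
  proof -
    have "{1..n} = Suc ` {..<n}" by (auto simp: image_iff) (metis Suc_pred' lessThan_iff less_eq_Suc_le not_less_eq_eq)
    then show ?thesis
      by (simp add: sum.reindex ordered_sample_def L_def)
  qed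
  also have "\<dots> = (\<Sum>a<n. H (\<sigma> a + 1) (L ! \<sigma> a))"
    using sum.reindex_bij_betw[OF bij, of "\<lambda>i. H (i+1) (L ! i)"] by simp
  also have "\<dots> = (\<Sum>a<n. H (\<sigma> a + 1) (\<omega> a))"
    using key by (intro sum.cong) auto
  finally show ?thesis by (simp add: \<sigma>_def)
qed

lemma rank_less_iff:
  fixes r :: "'a \<Rightarrow> real"
  assumes "b \<in> I" "finite I"
  shows "card {c\<in>I. r (\<omega> c) < r (\<omega> b)} < card {c\<in>I. r (\<omega> c) < r (\<omega> a)} \<longleftrightarrow> r (\<omega> b) < r (\<omega> a)"
proof
  assume "r (\<omega> b) < r (\<omega> a)"
  then have "{c\<in>I. r (\<omega> c) < r (\<omega> b)} \<subset> {c\<in>I. r (\<omega> c) < r (\<omega> a)}" using assms by auto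
  then show "card {c\<in>I. r (\<omega> c) < r (\<omega> b)} < card {c\<in>I. r (\<omega> c) < r (\<omega> a)}"
    using assms by (intro psubset_card_mono) auto
next
  assume *: "card {c\<in>I. r (\<omega> c) < r (\<omega> b)} < card {c\<in>I. r (\<omega> c) < r (\<omega> a)}"
  show "r (\<omega> b) < r (\<omega> a)"
  proof (rule ccontr)
    assume "\<not> r (\<omega> b) < r (\<omega> a)"
    then have "{c\<in>I. r (\<omega> c) < r (\<omega> a)} \<subseteq> {c\<in>I. r (\<omega> c) < r (\<omega> b)}" by auto
    then have "card {c\<in>I. r (\<omega> c) < r (\<omega> a)} \<le> card {c\<in>I. r (\<omega> c) < r (\<omega> b)}"
      using assms by (intro card_mono) auto
    with * show False by simp
  qed
qed



theorem mainTheorem2: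
  fixes M :: "'a measure"
    and p :: "'p::euclidean_space \<Rightarrow> 'x \<Rightarrow> 'a \<Rightarrow> real"
    and R :: "'x \<Rightarrow> 'a \<Rightarrow> real"
    and \<theta> :: "'p" and x :: "'x"
    and s :: "'a \<Rightarrow> 'p"
    and n k :: nat
  assumes sigma: "sigma_finite_measure M"
    and dens_meas: "\<And>t. p t x \<in> borel_measurable M"
    and dens_nonneg: "\<And>t y. y \<in> space M \<Longrightarrow> 0 \<le> p t x y"
    and dens_prob: "\<And>t. (\<integral>\<^sup>+ y. ennreal (p t x y) \<partial>M) = 1"
    and dens_diff: "\<And>y. y \<in> space M \<Longrightarrow> (\<lambda>t. p t x y) differentiable (at \<theta>)"
    and score: "\<And>y. y \<in> space M \<Longrightarrow> 0 < p \<theta> x y \<Longrightarrow> GDERIV (\<lambda>t. ln (p t x y)) \<theta> :> s y"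
    and R_meas: "R x \<in> borel_measurable M"
    and R_bounded: "\<exists>B. \<forall>y. \<bar>R x y\<bar> \<le> B"
    and nk: "2 \<le> k" "k \<le> n"
    and no_atoms: "\<And>c. measure (policy M p \<theta> x) {y \<in> space M. R x y = c} = 0"
    and int1: "integrable (PiM {..<n} (\<lambda>_. policy M p \<theta> x)) (term1 (R x) s n k)"
    and int2: "integrable (PiM {..<n} (\<lambda>_. policy M p \<theta> x)) (term2 (R x) s n k)"
    and int3: "integrable (PiM {..<n} (\<lambda>_. policy M p \<theta> x)) (G_hat (R x) s n k)"
    and int4: "integrable (policy M p \<theta> x)
                 (\<lambda>y. (R x y * P_le (policy M p \<theta> x) (R x) y ^ (k - 1)) *\<^sub>R s y)"
    and int5: "integrable (policy M p \<theta> x)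
                 (\<lambda>y. ((real k - 1) * g_fun (policy M p \<theta> x) (R x) k y) *\<^sub>R s y)"
    and int6: "integrable (policy M p \<theta> x)
                 (\<lambda>y. (R x y * P_le (policy M p \<theta> x) (R x) y ^ (k - 1)
                        - (real k - 1) * g_fun (policy M p \<theta> x) (R x) k y) *\<^sub>R s y)"
  shows "(\<integral>\<omega>. term1 (R x) s n k \<omega> \<partial>(PiM {..<n} (\<lambda>_. policy M p \<theta> x)))
           = (\<integral>y. (R x y * P_le (policy M p \<theta> x) (R x) y ^ (k - 1)) *\<^sub>R s y \<partial>(policy M p \<theta> x))
       \<and> (\<integral>\<omega>. term2 (R x) s n k \<omega> \<partial>(PiM {..<n} (\<lambda>_. policy M p \<theta> x)))
           = (\<integral>y. ((real k - 1) * g_fun (policy M p \<theta> x) (R x) k y) *\<^sub>R s y \<partial>(policy M p \<theta> x))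
       \<and> (\<integral>\<omega>. G_hat (R x) s n k \<omega> \<partial>(PiM {..<n} (\<lambda>_. policy M p \<theta> x)))
           = real k *\<^sub>R (\<integral>y. (R x y * P_le (policy M p \<theta> x) (R x) y ^ (k - 1)
                        - (real k - 1) * g_fun (policy M p \<theta> x) (R x) k y) *\<^sub>R s y \<partial>(policy M p \<theta> x))"
proof -
  define P where "P = policy M p \<theta> x"
  define r where "r = R x"
  define F where "F = P_le P r"
  define g where "g = g_fun P r k"
  define I where "I = {..<n}"
  define \<Omega> where "\<Omega> = PiM I (\<lambda>_. P)"
  define q where "q y y' = (if r y' < r y then 1 else 0 :: real)" for y y'
  have spP[simp]: "space P = space M" by (simp add: P_def policy_def)
  have setsP[simp]: "sets P = sets M" by (simp add: P_def policy_def)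
  have dm: "(\<lambda>y. ennreal (p \<theta> x y)) \<in> borel_measurable M" using dens_meas by measurable
  have Pps: "prob_space P"
  proof (rule prob_spaceI)
    have "emeasure P (space P) = (\<integral>\<^sup>+ y. ennreal (p \<theta> x y) * indicator (space M) y \<partial>M)"
      unfolding P_def policy_def by (simp add: emeasure_density dm)
    also have "\<dots> = (\<integral>\<^sup>+ y. ennreal (p \<theta> x y) \<partial>M)" by (intro nn_integral_cong) simp
    finally show "emeasure P (space P) = 1" using dens_prob by simp
  qed
  interpret P: prob_space P by (rule Pps)
  have rm[measurable]: "r \<in> borel_measurable P"
    using R_meas unfolding r_def by (simp add: measurable_cong_sets[OF setsP refl])
  have rM[measurable]: "r \<in> borel_measurable M" using R_meas by (simp add: r_def)
  have setsle[simp]: "{y'\<in>space M. r y' \<le> t} \<in> sets M" "{y'\<in>space M. r y' < t} \<in> sets M"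
    "{y'\<in>space M. r y' = t} \<in> sets M" for t by simp_all
  obtain B where B: "\<And>y. \<bar>r y\<bar> \<le> B" using R_bounded unfolding r_def by blast
  have na: "measure P {y \<in> space M. r y = c} = 0" for c
    using no_atoms[of c] unfolding P_def r_def .
  have qm[measurable]: "(\<lambda>z. q (fst z) (snd z)) \<in> borel_measurable (P \<Otimes>\<^sub>M P)"
    unfolding q_def by measurable
  have q01: "0 \<le> q y y' \<and> q y y' \<le> 1" for y y' by (simp add: q_def)
  define Fc where "Fc t = measure P {y' \<in> space P. r y' \<le> t}" for t
  have "mono Fc" unfolding Fc_def mono_def
    by (intro allI impI P.finite_measure_mono) auto
  then have Fcm: "Fc \<in> borel_measurable borel" by (rule borel_measurable_mono)
  have F_Fc: "F y = Fc (r y)" for y by (simp add: F_def Fc_def P_le_def)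
  have Fm[measurable]: "F \<in> borel_measurable P"
    unfolding F_Fc[abs_def] using measurable_compose[OF rm Fcm] by simp
  have FmM[measurable]: "F \<in> borel_measurable M"
    using Fm by (simp add: measurable_cong_sets[OF setsP refl])
  have F01: "0 \<le> F y \<and> F y \<le> 1" for y by (simp add: F_def P_le_def)
  have Fmono: "F y' \<le> F y" if "r y' \<le> r y" for y y'
    unfolding F_Fc using \<open>mono Fc\<close> that by (auto simp: mono_def)
  have qint: "(\<integral>y'. q y y' \<partial>P) = F y" for y
  proof -
    have "(\<integral>y'. q y y' \<partial>P) = (\<integral>y'. indicator {y' \<in> space P. r y' < r y} y' \<partial>P)"
      by (intro Bochner_Integration.integral_cong) (auto simp: q_def)
    also have "\<dots> = measure P {y' \<in> space P. r y' < r y}" by simp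
    also have "\<dots> = measure P {y' \<in> space P. r y' < r y} + measure P {y' \<in> space M. r y' = r y}"
      using na by simp
    also have "\<dots> = measure P ({y' \<in> space P. r y' < r y} \<union> {y' \<in> space M. r y' = r y})"
      by (intro P.finite_measure_Union[symmetric]) auto
    also have "{y' \<in> space P. r y' < r y} \<union> {y' \<in> space M. r y' = r y} = {y' \<in> space P. r y' \<le> r y}"
      by auto
    finally show ?thesis by (simp add: F_def P_le_def)
  qed
  have null_of_meas: "A \<in> null_sets P" if "A \<in> sets M" "measure P A = 0" for A
    using that by (simp add: null_sets_def P.emeasure_eq_measure)
  have Z0: "{y\<in>space M. F y = 0} \<in> null_sets P"
  proof (cases "{y\<in>space M. F y = 0} = {}")
    case True then show ?thesis by (simp only:) simp
  next
    case False
    define Z where "Z = {y\<in>space M. F y = 0}"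
    define u where "u = Sup (r ` Z)"
    have bdd: "bdd_above (r ` Z)" using B by (auto intro!: bdd_aboveI[where M=B] simp: abs_le_iff)
    have Zne: "r ` Z \<noteq> {}" using False by (simp add: Z_def)
    have ru: "r y \<le> u" if "y \<in> Z" for y unfolding u_def using bdd that by (auto intro: cSup_upper)
    have sub: "Z \<subseteq> (\<Union>j. {y\<in>space M. r y \<le> u - 1 / Suc j}) \<union> {y\<in>space M. r y = u}"
    proof
      fix y assume y: "y \<in> Z"
      show "y \<in> (\<Union>j. {y\<in>space M. r y \<le> u - 1 / Suc j}) \<union> {y\<in>space M. r y = u}"
      proof (cases "r y = u")
        case True then show ?thesis using y by (auto simp: Z_def)
      next
        case False
        then have "r y < u" using ru[OF y] by simp
        then obtain j :: nat where "1 / Suc j < u - r y"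
          by (metis diff_gt_0_iff_gt nat_approx_posE)
        then have "r y \<le> u - 1 / Suc j" by simp
        then show ?thesis using y by (auto simp: Z_def)
      qed
    qed
    have nj: "{y\<in>space M. r y \<le> u - 1 / Suc j} \<in> null_sets P" for j :: nat
    proof -
      have "u - 1 / Suc j < u" by simp
      then obtain z where z: "z \<in> Z" "u - 1 / Suc j < r z"
        using less_cSup_iff[OF Zne bdd] unfolding u_def by auto
      have "measure P {y\<in>space M. r y \<le> u - 1 / Suc j} \<le> measure P {y\<in>space M. r y \<le> r z}"
        using z by (intro P.finite_measure_mono) auto
      also have "\<dots> = F z" by (simp add: F_def P_le_def)
      also have "\<dots> = 0" using z by (simp add: Z_def)
      finally show ?thesis by (intro null_of_meas) (auto intro: antisym measure_nonneg)
    qed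
    have "(\<Union>j. {y\<in>space M. r y \<le> u - 1 / Suc j}) \<union> {y\<in>space M. r y = u} \<in> null_sets P"
      using nj null_of_meas[OF _ na[of u]] by (intro null_sets.Un null_sets_UN) auto
    moreover have "Z \<in> sets P" unfolding Z_def setsP by measurable
    ultimately show ?thesis using sub unfolding Z_def[symmetric] by (rule null_sets_subset)
  qed
  define c where "c y = r y * F y ^ (k - 1)" for y
  have int4c: "integrable P (\<lambda>y. c y *\<^sub>R s y)"
    using int4 unfolding P_def r_def F_def c_def .
  have cm[measurable]: "c \<in> borel_measurable P" unfolding c_def by measurable
  have csm[measurable]: "(\<lambda>y. c y *\<^sub>R s y) \<in> borel_measurable P"
    using int4c by (rule borel_measurable_integrable)
  define s' where "s' y = (if c y = 0 then 0 else (1 / c y) *\<^sub>R (c y *\<^sub>R s y))" for y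
  have s'm[measurable]: "s' \<in> borel_measurable P" unfolding s'_def by measurable
  have cs': "c y *\<^sub>R s' y = c y *\<^sub>R s y" for y by (simp add: s'_def)
  have s's: "s' y = s y" if "c y \<noteq> 0" for y using that by (simp add: s'_def)
  define N where "N = {y\<in>space M. c y = 0}"
  have Nnull: "N \<in> null_sets P"
  proof -
    have n0: "{y\<in>space M. r y = 0} \<in> null_sets P"
      by (rule null_of_meas[OF _ na[of 0]]) simp
    have U: "{y\<in>space M. r y = 0} \<union> {y\<in>space M. F y = 0} \<in> null_sets P"
      using Z0 n0 by (rule null_sets.Un[rotated])
    have Ns: "N \<in> sets P" unfolding N_def setsP c_def by measurable
    have sub: "N \<subseteq> {y\<in>space M. r y = 0} \<union> {y\<in>space M. F y = 0}"
      by (auto simp: N_def c_def)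
    show ?thesis by (rule null_sets_subset[OF U Ns sub])
  qed
  have AEs: "AE y in P. s' y = s y"
    using AE_not_in[OF Nnull] AE_space[of P] by eventually_elim (auto simp: N_def s's)
  have int4': "integrable P (\<lambda>y. c y *\<^sub>R s' y)" using int4c by (simp add: cs')
  define W where "W y y' = r y' * q y y'" for y y'
  have Wm[measurable]: "(\<lambda>z. W (fst z) (snd z)) \<in> borel_measurable (P \<Otimes>\<^sub>M P)"
    unfolding W_def q_def by measurable
  have B0: "0 \<le> B" using B[of undefined] by linarith
  have Wb: "\<bar>W y y'\<bar> \<le> B" for y y' using B[of y'] B0 by (simp add: W_def q_def)
  have bint: "integrable P f" if "f \<in> borel_measurable P" "\<And>y. \<bar>f y\<bar> \<le> K" for f :: "'a \<Rightarrow> real" and K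
    by (rule P.integrable_const_bound[where B=K]) (use that in auto)
  have g_alt: "g y = (\<integral>y'. (\<integral>z. q y' z \<partial>P) ^ (k - 2) * W y y' \<partial>P)" for y
    unfolding g_def g_fun_def qint
    by (intro Bochner_Integration.integral_cong) (auto simp: W_def q_def F_def)
  have gm[measurable]: "g \<in> borel_measurable P"
  proof -
    have "(\<lambda>z. F (snd z) ^ (k - 2) * W (fst z) (snd z)) \<in> borel_measurable (P \<Otimes>\<^sub>M P)" by measurable
    then have "(\<lambda>y. \<integral>y'. F y' ^ (k - 2) * W y y' \<partial>P) \<in> borel_measurable P"
      using P.borel_measurable_lebesgue_integral[of "\<lambda>y y'. F y' ^ (k - 2) * W y y'" P]
      by (simp add: split_beta')
    then show ?thesis unfolding g_alt[abs_def] qint .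
  qed
  have int5c: "integrable P (\<lambda>y. ((real k - 1) * g y) *\<^sub>R s y)"
    using int5 unfolding P_def r_def g_def .
  have "integrable P (\<lambda>y. ((real k - 1) * g y) *\<^sub>R s' y) \<longleftrightarrow> integrable P (\<lambda>y. ((real k - 1) * g y) *\<^sub>R s y)"
    apply (rule integrable_cong_AE)
    subgoal by measurable
    subgoal using int5c by (rule borel_measurable_integrable)
    subgoal using AEs by eventually_elim simp
    done
  then have "integrable P (\<lambda>y. ((real k - 1) * g y) *\<^sub>R s' y)" using int5c by simp
  then have "integrable P (\<lambda>y. (1 / (real k - 1)) *\<^sub>R (((real k - 1) * g y) *\<^sub>R s' y))"
    by (rule integrable_scaleR_right)
  then have int5': "integrable P (\<lambda>y. g y *\<^sub>R s' y)" using nk by simp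
  define h where "h y = (\<integral>y'. F y' ^ (k - 2) * \<bar>W y y'\<bar> \<partial>P)" for y
  have hm[measurable]: "h \<in> borel_measurable P"
  proof -
    have "(\<lambda>z. F (snd z) ^ (k - 2) * \<bar>W (fst z) (snd z)\<bar>) \<in> borel_measurable (P \<Otimes>\<^sub>M P)" by measurable
    then show ?thesis
      using P.borel_measurable_lebesgue_integral[of "\<lambda>y y'. F y' ^ (k - 2) * \<bar>W y y'\<bar>" P]
      by (simp add: split_beta' h_def[abs_def])
  qed
  have Wm1[measurable]: "W y \<in> borel_measurable P" for y unfolding W_def q_def by measurable
  have Fk: "0 \<le> F y' ^ j \<and> F y' ^ j \<le> 1" for y' j using F01[of y'] by (simp add: power_le_one)
  have g_F: "g y = (\<integral>y'. F y' ^ (k - 2) * W y y' \<partial>P)" for y using g_alt[of y] by (simp add: qint)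
  have h0: "0 \<le> h y" for y unfolding h_def using Fk by (intro Bochner_Integration.integral_nonneg) auto
  have mb: "\<bar>a * b\<bar> \<le> B" if "0 \<le> a" "a \<le> 1" "\<bar>b\<bar> \<le> B" for a b :: real
  proof -
    have "a * \<bar>b\<bar> \<le> 1 * \<bar>b\<bar>" by (rule mult_right_mono) (use that in auto)
    then show ?thesis using that by (simp add: abs_mult)
  qed
  have mbW: "\<bar>F y' ^ j * W y y'\<bar> \<le> B" for y y' j by (rule mb) (use Fk Wb in auto)
  have mbW': "\<bar>F y' ^ j * \<bar>W y y'\<bar>\<bar> \<le> B" for y y' j by (rule mb) (use Fk Wb in auto)
  have hbound: "h y \<le> \<bar>g y\<bar> + 2 * \<bar>c y\<bar>" for y
  proof -
    have i1: "integrable P (\<lambda>y'. F y' ^ (k - 2) * \<bar>W y y'\<bar>)"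
      by (rule bint[of _ B]) (use mbW' in auto)
    have i2: "integrable P (\<lambda>y'. F y' ^ (k - 2) * W y y')"
      by (rule bint[of _ B]) (use mbW in auto)
    have i3: "integrable P (\<lambda>y'. q y y')"
      by (rule bint[of _ 1]) (auto simp: q_def)
    have "h y + g y = (\<integral>y'. F y' ^ (k - 2) * \<bar>W y y'\<bar> + F y' ^ (k - 2) * W y y' \<partial>P)"
      unfolding h_def g_F using i1 i2 by simp
    also have "\<dots> \<le> (\<integral>y'. (2 * max (r y) 0 * F y ^ (k - 2)) * q y y' \<partial>P)"
    proof (rule integral_mono)
      show "integrable P (\<lambda>y'. F y' ^ (k - 2) * \<bar>W y y'\<bar> + F y' ^ (k - 2) * W y y')"
        using i1 i2 by simp
      show "integrable P (\<lambda>y'. (2 * max (r y) 0 * F y ^ (k - 2)) * q y y')"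
        using i3 by simp
      fix y' assume "y' \<in> space P"
      show "F y' ^ (k - 2) * \<bar>W y y'\<bar> + F y' ^ (k - 2) * W y y' \<le> (2 * max (r y) 0 * F y ^ (k - 2)) * q y y'"
      proof (cases "r y' < r y")
        case True
        have a: "F y' ^ (k - 2) \<le> F y ^ (k - 2)"
          using Fmono[of y' y] True F01 by (intro power_mono) auto
        have b: "\<bar>r y'\<bar> + r y' \<le> 2 * max (r y) 0" using True by linarith
        have "F y' ^ (k - 2) * (\<bar>r y'\<bar> + r y') \<le> F y ^ (k - 2) * (2 * max (r y) 0)"
          by (rule mult_mono[OF a b]) (use Fk in auto)
        then show ?thesis using True by (simp add: W_def q_def algebra_simps)
      next
        case False
        then show ?thesis by (simp add: W_def q_def)
      qed
    qed
    also have "\<dots> = 2 * max (r y) 0 * F y ^ (k - 2) * F y"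
      using qint[of y] by simp
    also have "\<dots> = 2 * (max (r y) 0 * F y ^ (k - 1))"
    proof -
      have "k - 1 = Suc (k - 2)" using nk by simp
      then show ?thesis by (simp add: power_Suc2 algebra_simps)
    qed
    also have "\<dots> \<le> 2 * \<bar>c y\<bar>"
      unfolding c_def using Fk[of y "k - 1"] by (auto simp: abs_mult intro!: mult_right_mono)
    finally show ?thesis by linarith
  qed
  have inth: "integrable P (\<lambda>y. h y *\<^sub>R s' y)"
  proof (rule Bochner_Integration.integrable_bound)
    show "integrable P (\<lambda>y. norm (g y *\<^sub>R s' y) + 2 * norm (c y *\<^sub>R s' y))"
      using int5' int4' by (intro Bochner_Integration.integrable_add integrable_mult_right integrable_norm)
    show "(\<lambda>y. h y *\<^sub>R s' y) \<in> borel_measurable P" by measurable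
    show "AE y in P. norm (h y *\<^sub>R s' y) \<le> norm (norm (g y *\<^sub>R s' y) + 2 * norm (c y *\<^sub>R s' y))"
    proof (intro AE_I2)
      fix y
      have "norm (h y *\<^sub>R s' y) = h y * norm (s' y)" using h0[of y] by simp
      also have "\<dots> \<le> (\<bar>g y\<bar> + 2 * \<bar>c y\<bar>) * norm (s' y)"
        by (rule mult_right_mono[OF hbound]) simp
      also have "\<dots> = norm (norm (g y *\<^sub>R s' y) + 2 * norm (c y *\<^sub>R s' y))"
        by (simp add: algebra_simps)
      finally show "norm (h y *\<^sub>R s' y) \<le> norm (norm (g y *\<^sub>R s' y) + 2 * norm (c y *\<^sub>R s' y))" .
    qed
  qed
  have finI: "finite I" by (simp add: I_def)
  have AEpair: "AE \<omega> in \<Omega>. r (\<omega> a) \<noteq> r (\<omega> b)" if ab: "a \<in> I" "b \<in> I" "a \<noteq> b" for a b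
  proof -
    define qe where "qe y y' = (if r y' = r y then 1 else 0 :: real)" for y y'
    have qem: "(\<lambda>z. qe (fst z) (snd z)) \<in> borel_measurable (P \<Otimes>\<^sub>M P)" unfolding qe_def by measurable
    have qe01: "0 \<le> qe y y' \<and> qe y y' \<le> 1" for y y' by (simp add: qe_def)
    have qeint: "(\<integral>y'. qe y y' \<partial>P) = 0" for y
    proof -
      have "(\<integral>y'. qe y y' \<partial>P) = (\<integral>y'. indicator {y' \<in> space M. r y' = r y} y' \<partial>P)"
        by (intro Bochner_Integration.integral_cong) (auto simp: qe_def)
      also have "\<dots> = measure P {y' \<in> space M. r y' = r y}" by simp
      finally show ?thesis using na by simp
    qed
    have S: "{b} \<subseteq> I - {a}" using ab by auto
    note C = PiM_center[OF Pps finI ab(1) S qem qe01, of "\<lambda>_. 1::real"]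
    have i: "integrable \<Omega> (\<lambda>\<omega>. qe (\<omega> a) (\<omega> b))" using C(1) by (simp add: qeint \<Omega>_def)
    have e: "(\<integral>\<omega>. qe (\<omega> a) (\<omega> b) \<partial>\<Omega>) = 0" using C(2) by (simp add: qeint \<Omega>_def)
    have "AE \<omega> in \<Omega>. qe (\<omega> a) (\<omega> b) = 0"
      using integral_nonneg_eq_0_iff_AE[OF i] e qe01 by simp
    then show ?thesis by eventually_elim (auto simp: qe_def split: if_splits)
  qed
  have AEN: "AE \<omega> in \<Omega>. \<omega> a \<notin> N" if a: "a \<in> I" for a
  proof -
    have qe01: "0 \<le> q y y' \<and> q y y' \<le> 1" for y y' by (rule q01)
    have Nm: "N \<in> sets P" using Nnull by auto
    have iN: "integrable P (indicator N :: 'a \<Rightarrow> real)"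
      using Nnull by (intro integrable_real_indicator) auto
    note C = PiM_center[OF Pps finI a _ qm qe01, of "{}" "indicator N :: 'a \<Rightarrow> real"]
    have i: "integrable \<Omega> (\<lambda>\<omega>. indicator N (\<omega> a) :: real)" using C(1) Nm iN by (simp add: \<Omega>_def)
    have e: "(\<integral>\<omega>. indicator N (\<omega> a) \<partial>\<Omega>) = (0::real)" using C(2) Nm iN null_setsD1[OF Nnull] by (simp add: \<Omega>_def measure_def)
    have "AE \<omega> in \<Omega>. (indicator N (\<omega> a) :: real) = 0"
      using integral_nonneg_eq_0_iff_AE[OF i] e by simp
    then show ?thesis by eventually_elim (auto simp: indicator_def split: if_splits)
  qed
  have AEall: "AE \<omega> in \<Omega>. inj_on (\<lambda>i. r (\<omega> i)) I \<and> (\<forall>a\<in>I. \<omega> a \<notin> N)"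
  proof -
    have "AE \<omega> in \<Omega>. \<forall>a\<in>I. \<forall>b\<in>I. a \<noteq> b \<longrightarrow> r (\<omega> a) \<noteq> r (\<omega> b)"
      using finI AEpair by (intro AE_finite_allI) (auto intro: AE_finite_allI)
    moreover have "AE \<omega> in \<Omega>. \<forall>a\<in>I. \<omega> a \<notin> N"
      using finI AEN by (intro AE_finite_allI) auto
    ultimately show ?thesis by eventually_elim (auto simp: inj_on_def)
  qed
  have spO: "\<omega> a \<in> space M" if "\<omega> \<in> space \<Omega>" "a \<in> I" for \<omega> a
    using that by (auto simp: \<Omega>_def space_PiM)
  have cardI: "card I = n" by (simp add: I_def)
  have nk1: "k - 1 \<le> n - 1" using nk by simp
  define C1 where "C1 = real ((n - 1) choose (k - 1))"
  have C1pos: "C1 > 0" using nk1 by (simp add: C1_def)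
  define Sub1 where "Sub1 a = {S. S \<subseteq> I - {a} \<and> card S = k - 1}" for a
  have cardSub1: "card (Sub1 a) = (n - 1) choose (k - 1)" if "a \<in> I" for a
    unfolding Sub1_def using that finI cardI by (simp add: card_subsets_eq card_Diff_singleton)
  have finSub1: "finite (Sub1 a)" for a unfolding Sub1_def using finI by simp
  define T1 where "T1 \<omega> = (\<Sum>a\<in>I. \<Sum>S\<in>Sub1 a. (1 / (real n * C1)) *\<^sub>R
      ((\<Prod>b\<in>S. q (\<omega> a) (\<omega> b)) *\<^sub>R (r (\<omega> a) *\<^sub>R s' (\<omega> a))))" for \<omega>
  define E1 where "E1 = (\<integral>y. c y *\<^sub>R s' y \<partial>P)"
  have T1parts: "integrable \<Omega> (\<lambda>\<omega>. (\<Prod>b\<in>S. q (\<omega> a) (\<omega> b)) *\<^sub>R (r (\<omega> a) *\<^sub>R s' (\<omega> a)))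
       \<and> (\<integral>\<omega>. (\<Prod>b\<in>S. q (\<omega> a) (\<omega> b)) *\<^sub>R (r (\<omega> a) *\<^sub>R s' (\<omega> a)) \<partial>\<Omega>) = E1"
    if a: "a \<in> I" and S: "S \<in> Sub1 a" for a S
  proof -
    have SI: "S \<subseteq> I - {a}" and cS: "card S = k - 1" using S by (auto simp: Sub1_def)
    have Vm: "(\<lambda>y. r y *\<^sub>R s' y) \<in> borel_measurable P" by measurable
    have eq: "(\<integral>y'. q y y' \<partial>P) ^ card S *\<^sub>R (r y *\<^sub>R s' y) = c y *\<^sub>R s' y" for y
      by (simp add: qint cS c_def mult.commute)
    have Vi: "integrable P (\<lambda>y. (\<integral>y'. q y y' \<partial>P) ^ card S *\<^sub>R (r y *\<^sub>R s' y))"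
      unfolding eq by (rule int4')
    note C = PiM_center[OF Pps finI a SI qm q01 Vm Vi]
    show ?thesis using C unfolding \<Omega>_def eq E1_def by simp
  qed
  have T1int: "integrable \<Omega> T1"
    unfolding T1_def using T1parts
    by (intro Bochner_Integration.integrable_sum integrable_scaleR_right) auto
  have T1E: "(\<integral>\<omega>. T1 \<omega> \<partial>\<Omega>) = E1"
  proof -
    define f where "f a S \<omega> = (\<Prod>b\<in>S. q (\<omega> a) (\<omega> b)) *\<^sub>R (r (\<omega> a) *\<^sub>R s' (\<omega> a))" for a :: nat and S \<omega>
    have fi: "integrable \<Omega> (f a S)" "integral\<^sup>L \<Omega> (f a S) = E1" if "a \<in> I" "S \<in> Sub1 a" for a S
      using T1parts[OF that] unfolding f_def by auto
    have "(\<integral>\<omega>. T1 \<omega> \<partial>\<Omega>) = (\<integral>\<omega>. (\<Sum>a\<in>I. \<Sum>S\<in>Sub1 a. (1 / (real n * C1)) *\<^sub>R f a S \<omega>) \<partial>\<Omega>)"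
      unfolding T1_def f_def ..
    also have "\<dots> = (\<Sum>a\<in>I. (\<integral>\<omega>. (\<Sum>S\<in>Sub1 a. (1 / (real n * C1)) *\<^sub>R f a S \<omega>) \<partial>\<Omega>))"
      by (rule Bochner_Integration.integral_sum) (use fi in \<open>auto intro!: Bochner_Integration.integrable_sum integrable_scaleR_right\<close>)
    also have "\<dots> = (\<Sum>a\<in>I. \<Sum>S\<in>Sub1 a. (\<integral>\<omega>. (1 / (real n * C1)) *\<^sub>R f a S \<omega> \<partial>\<Omega>))"
      by (intro sum.cong refl Bochner_Integration.integral_sum) (use fi in \<open>auto intro!: integrable_scaleR_right\<close>)
    also have "\<dots> = (\<Sum>a\<in>I. \<Sum>S\<in>Sub1 a. (1 / (real n * C1)) *\<^sub>R E1)"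
      by (intro sum.cong refl) (simp only: integral_scaleR_right fi)
    also have "\<dots> = (\<Sum>a\<in>I. real (card (Sub1 a)) *\<^sub>R ((1 / (real n * C1)) *\<^sub>R E1))"
      by (simp only: sum_constant_scaleR)
    also have "\<dots> = (\<Sum>a\<in>I. C1 *\<^sub>R ((1 / (real n * C1)) *\<^sub>R E1))"
      by (intro sum.cong refl) (simp add: cardSub1 C1_def)
    also have "\<dots> = real (card I) *\<^sub>R (C1 *\<^sub>R ((1 / (real n * C1)) *\<^sub>R E1))"
      by (simp only: sum_constant_scaleR)
    also have "\<dots> = E1" using C1pos nk by (simp add: cardI)
    finally show ?thesis .
  qed
  have s_s': "s (\<omega> a) = s' (\<omega> a)" if "\<omega> \<in> space \<Omega>" "a \<in> I" "\<omega> a \<notin> N" for \<omega> a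
    using that spO[OF that(1,2)] by (simp add: N_def s's)
  have binom: "real (card {b\<in>{..<n}. r (\<omega> b) < r (\<omega> a)} choose m)
      = (\<Sum>S\<in>{S. S \<subseteq> I - A \<and> card S = m}. \<Prod>b\<in>S. q (\<omega> a) (\<omega> b))"
    if "a \<in> A" "\<And>b. b \<in> A \<Longrightarrow> \<not> r (\<omega> b) < r (\<omega> a)" for \<omega> a A m
  proof -
    have "(\<Sum>S\<in>{S. S \<subseteq> I - A \<and> card S = m}. \<Prod>b\<in>S. q (\<omega> a) (\<omega> b))
        = real (card {b\<in>I - A. r (\<omega> b) < r (\<omega> a)} choose m)"
      unfolding q_def by (rule sum_subsets_prod_indicator) (use finI in simp)
    also have "{b\<in>I - A. r (\<omega> b) < r (\<omega> a)} = {b\<in>{..<n}. r (\<omega> b) < r (\<omega> a)}"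
      using that by (auto simp: I_def)
    finally show ?thesis by simp
  qed
  have pw1: "term1 r s n k \<omega> = T1 \<omega>"
    if \<omega>: "\<omega> \<in> space \<Omega>" "inj_on (\<lambda>i. r (\<omega> i)) I" "\<forall>a\<in>I. \<omega> a \<notin> N" for \<omega>
  proof -
    define \<sigma> where "\<sigma> a = card {b\<in>{..<n}. r (\<omega> b) < r (\<omega> a)}" for a
    have inj': "inj_on (\<lambda>i. r (\<omega> i)) {..<n}" using \<omega>(2) by (simp add: I_def)
    have "term1 r s n k \<omega> = (1 / real n) *\<^sub>R (\<Sum>a<n. (r (\<omega> a) * (real (\<sigma> a choose (k - 1)) / C1)) *\<^sub>R s (\<omega> a))"
      unfolding term1_def
      using ordered_sample_reindex[of r \<omega> n, OF inj', of "\<lambda>i y. (r y * (real ((i - 1) choose (k - 1)) / C1)) *\<^sub>R s y"]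
      by (simp add: C1_def \<sigma>_def)
    also have "\<dots> = (\<Sum>a\<in>I. (1 / real n) *\<^sub>R ((r (\<omega> a) * (real (\<sigma> a choose (k - 1)) / C1)) *\<^sub>R s (\<omega> a)))"
      by (simp add: scaleR_sum_right I_def)
    also have "\<dots> = T1 \<omega>"
      unfolding T1_def
    proof (intro sum.cong refl)
      fix a assume a: "a \<in> I"
      have X: "real (\<sigma> a choose (k - 1)) = (\<Sum>S\<in>Sub1 a. \<Prod>b\<in>S. q (\<omega> a) (\<omega> b))"
        unfolding \<sigma>_def Sub1_def by (rule binom[of a "{a}"]) auto
      have "(\<Sum>S\<in>Sub1 a. (1 / (real n * C1)) *\<^sub>R ((\<Prod>b\<in>S. q (\<omega> a) (\<omega> b)) *\<^sub>R (r (\<omega> a) *\<^sub>R s' (\<omega> a))))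
          = (\<Sum>S\<in>Sub1 a. ((1 / (real n * C1)) * r (\<omega> a)) * (\<Prod>b\<in>S. q (\<omega> a) (\<omega> b))) *\<^sub>R s' (\<omega> a)"
        by (simp add: scaleR_sum_left algebra_simps)
      also have "\<dots> = (((1 / (real n * C1)) * r (\<omega> a)) * real (\<sigma> a choose (k - 1))) *\<^sub>R s' (\<omega> a)"
        by (simp only: X sum_distrib_left)
      also have "\<dots> = (1 / real n) *\<^sub>R ((r (\<omega> a) * (real (\<sigma> a choose (k - 1)) / C1)) *\<^sub>R s (\<omega> a))"
        using s_s'[OF \<omega>(1) a] \<omega>(3) a by simp
      finally show "(1 / real n) *\<^sub>R ((r (\<omega> a) * (real (\<sigma> a choose (k - 1)) / C1)) *\<^sub>R s (\<omega> a))
          = (\<Sum>S\<in>Sub1 a. (1 / (real n * C1)) *\<^sub>R ((\<Prod>b\<in>S. q (\<omega> a) (\<omega> b)) *\<^sub>R (r (\<omega> a) *\<^sub>R s' (\<omega> a))))"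
        by simp
    qed
    finally show ?thesis .
  qed
  have res1: "(\<integral>\<omega>. term1 r s n k \<omega> \<partial>\<Omega>) = E1"
  proof -
    have "(\<integral>\<omega>. term1 r s n k \<omega> \<partial>\<Omega>) = (\<integral>\<omega>. T1 \<omega> \<partial>\<Omega>)"
    proof (rule integral_cong_AE)
      show "term1 r s n k \<in> borel_measurable \<Omega>"
        using int1 unfolding \<Omega>_def I_def P_def r_def by (rule borel_measurable_integrable)
      show "T1 \<in> borel_measurable \<Omega>" using T1int by (rule borel_measurable_integrable)
      show "AE \<omega> in \<Omega>. term1 r s n k \<omega> = T1 \<omega>"
        using AEall AE_space[of \<Omega>] by eventually_elim (auto intro: pw1)
    qed
    then show ?thesis using T1E by simp
  qed
  have rhs1: "(\<integral>y. c y *\<^sub>R s y \<partial>P) = E1" unfolding E1_def by (simp add: cs')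
  have nk2: "k - 2 \<le> n - 2" using nk by simp
  define C2 where "C2 = real ((n - 2) choose (k - 2))"
  have C2pos: "C2 > 0" using nk2 by (simp add: C2_def)
  define Sub2 where "Sub2 a b = {T. T \<subseteq> I - {a, b} \<and> card T = k - 2}" for a b
  have cardSub2: "card (Sub2 a b) = (n - 2) choose (k - 2)" if "a \<in> I" "b \<in> I" "a \<noteq> b" for a b
  proof -
    have "card (I - {a, b}) = n - 2" using that finI cardI by (simp add: card_Diff_subset)
    then show ?thesis unfolding Sub2_def using finI by (simp add: card_subsets_eq)
  qed
  define c2 where "c2 = (real k - 1) / (real n - 1) / (real n * C2)"
  define T2 where "T2 \<omega> = (\<Sum>a\<in>I. \<Sum>b\<in>I - {a}. \<Sum>T\<in>Sub2 a b. c2 *\<^sub>R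
      (((\<Prod>c\<in>T. q (\<omega> b) (\<omega> c)) * W (\<omega> a) (\<omega> b)) *\<^sub>R s' (\<omega> a)))" for \<omega>
  define E2 where "E2 = (\<integral>y. g y *\<^sub>R s' y \<partial>P)"
  define f2 where "f2 a b T \<omega> = ((\<Prod>c\<in>T. q (\<omega> b) (\<omega> c)) * W (\<omega> a) (\<omega> b)) *\<^sub>R s' (\<omega> a)"
    for a b :: nat and T \<omega>
  have T2parts: "integrable \<Omega> (f2 a b T) \<and> integral\<^sup>L \<Omega> (f2 a b T) = E2"
    if a: "a \<in> I" and b: "b \<in> I - {a}" and T: "T \<in> Sub2 a b" for a b T
  proof -
    have TI: "T \<subseteq> I - {a, b}" and cT: "card T = k - 2" using T by (auto simp: Sub2_def)
    have bI: "b \<in> I" "b \<noteq> a" using b by auto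
    have eq: "(\<integral>y'. (\<integral>z. q y' z \<partial>P) ^ card T * \<bar>W y y'\<bar> \<partial>P) = h y" for y
      by (simp add: qint cT h_def)
    have Vi: "integrable P (\<lambda>y. (\<integral>y'. (\<integral>z. q y' z \<partial>P) ^ card T * \<bar>W y y'\<bar> \<partial>P) *\<^sub>R s' y)"
      unfolding eq by (rule inth)
    have eq2: "(\<integral>y'. (\<integral>z. q y' z \<partial>P) ^ card T * W y y' \<partial>P) = g y" for y
      by (simp add: qint cT g_F)
    note C = PiM_center2[OF Pps finI a bI(1) bI(2) TI qm q01 Wm Wb s'm Vi]
    show ?thesis using C unfolding \<Omega>_def eq2 E2_def f2_def by simp
  qed
  have T2int: "integrable \<Omega> T2"
    unfolding T2_def f2_def[symmetric] using T2parts
    by (intro Bochner_Integration.integrable_sum integrable_scaleR_right) auto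
  have T2E: "(\<integral>\<omega>. T2 \<omega> \<partial>\<Omega>) = (real k - 1) *\<^sub>R E2"
  proof -
    have "(\<integral>\<omega>. T2 \<omega> \<partial>\<Omega>) = (\<integral>\<omega>. (\<Sum>a\<in>I. \<Sum>b\<in>I - {a}. \<Sum>T\<in>Sub2 a b. c2 *\<^sub>R f2 a b T \<omega>) \<partial>\<Omega>)"
      unfolding T2_def f2_def ..
    also have "\<dots> = (\<Sum>a\<in>I. (\<integral>\<omega>. (\<Sum>b\<in>I - {a}. \<Sum>T\<in>Sub2 a b. c2 *\<^sub>R f2 a b T \<omega>) \<partial>\<Omega>))"
      by (rule Bochner_Integration.integral_sum) (use T2parts in \<open>auto intro!: Bochner_Integration.integrable_sum integrable_scaleR_right\<close>)
    also have "\<dots> = (\<Sum>a\<in>I. \<Sum>b\<in>I - {a}. (\<integral>\<omega>. (\<Sum>T\<in>Sub2 a b. c2 *\<^sub>R f2 a b T \<omega>) \<partial>\<Omega>))"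
      by (intro sum.cong refl Bochner_Integration.integral_sum) (use T2parts in \<open>auto intro!: Bochner_Integration.integrable_sum integrable_scaleR_right\<close>)
    also have "\<dots> = (\<Sum>a\<in>I. \<Sum>b\<in>I - {a}. \<Sum>T\<in>Sub2 a b. (\<integral>\<omega>. c2 *\<^sub>R f2 a b T \<omega> \<partial>\<Omega>))"
      by (intro sum.cong refl Bochner_Integration.integral_sum) (use T2parts in \<open>auto intro!: integrable_scaleR_right\<close>)
    also have "\<dots> = (\<Sum>a\<in>I. \<Sum>b\<in>I - {a}. \<Sum>T\<in>Sub2 a b. c2 *\<^sub>R E2)"
      using T2parts by (intro sum.cong refl) (simp only: integral_scaleR_right)
    also have "\<dots> = (\<Sum>a\<in>I. \<Sum>b\<in>I - {a}. real (card (Sub2 a b)) *\<^sub>R (c2 *\<^sub>R E2))"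
      by (simp only: sum_constant_scaleR)
    also have "\<dots> = (\<Sum>a\<in>I. \<Sum>b\<in>I - {a}. C2 *\<^sub>R (c2 *\<^sub>R E2))"
      by (intro sum.cong refl) (simp add: cardSub2 C2_def)
    also have "\<dots> = (\<Sum>a\<in>I. real (card (I - {a})) *\<^sub>R (C2 *\<^sub>R (c2 *\<^sub>R E2)))"
      by (simp only: sum_constant_scaleR)
    also have "\<dots> = (\<Sum>a\<in>I. (real n - 1) *\<^sub>R (C2 *\<^sub>R (c2 *\<^sub>R E2)))"
      using finI cardI nk by (intro sum.cong refl) (simp add: card_Diff_singleton of_nat_diff)
    also have "\<dots> = real (card I) *\<^sub>R ((real n - 1) *\<^sub>R (C2 *\<^sub>R (c2 *\<^sub>R E2)))"
      by (simp only: sum_constant_scaleR)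
    also have "\<dots> = (real k - 1) *\<^sub>R E2"
    proof -
      have "real n - 1 > 0" using nk by simp
      then have "real (card I) * ((real n - 1) * (C2 * c2)) = real k - 1"
        using C2pos nk by (simp add: cardI c2_def field_simps)
      then show ?thesis by (simp add: scaleR_scaleR)
    qed
    finally show ?thesis .
  qed
  have pw2: "term2 r s n k \<omega> = T2 \<omega>"
    if \<omega>: "\<omega> \<in> space \<Omega>" "inj_on (\<lambda>i. r (\<omega> i)) I" "\<forall>a\<in>I. \<omega> a \<notin> N" for \<omega>
  proof -
    define \<sigma> where "\<sigma> a = card {b\<in>{..<n}. r (\<omega> b) < r (\<omega> a)}" for a
    define fj where "fj j y = r y * (real ((j - 1) choose (k - 2)) / C2)" for j y
    define \<kappa> where "\<kappa> = (real k - 1) / (real n - 1)"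
    define os where "os = ordered_sample r n \<omega>"
    have inj': "inj_on (\<lambda>i. r (\<omega> i)) {..<n}" using \<omega>(2) by (simp add: I_def)
    have reidx: "(\<Sum>i=1..n. G i (os i)) = (\<Sum>a<n. G (\<sigma> a + 1) (\<omega> a))" for G :: "nat \<Rightarrow> 'a \<Rightarrow> real"
      unfolding os_def \<sigma>_def by (rule ordered_sample_reindex[of r \<omega> n, OF inj'])
    have reidx': "(\<Sum>i=1..n. G i (os i)) = (\<Sum>a<n. G (\<sigma> a + 1) (\<omega> a))" for G :: "nat \<Rightarrow> 'a \<Rightarrow> 'p"
      unfolding os_def \<sigma>_def by (rule ordered_sample_reindex[of r \<omega> n, OF inj'])
    have "term2 r s n k \<omega> = (1 / real n) *\<^sub>R (\<Sum>i=1..n. (\<lambda>i y. (\<kappa> * (\<Sum>j=1..<i. fj j (os j))) *\<^sub>R s y) i (os i))"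
      unfolding term2_def fj_def \<kappa>_def os_def C2_def by (rule refl)
    also have "\<dots> = (1 / real n) *\<^sub>R (\<Sum>a<n. (\<kappa> * (\<Sum>j=1..<\<sigma> a + 1. fj j (os j))) *\<^sub>R s (\<omega> a))"
      by (subst reidx') simp
    finally have t2: "term2 r s n k \<omega> = (1 / real n) *\<^sub>R (\<Sum>a<n. (\<kappa> * (\<Sum>j=1..<\<sigma> a + 1. fj j (os j))) *\<^sub>R s (\<omega> a))" .
    have rk: "\<sigma> b < \<sigma> a \<longleftrightarrow> r (\<omega> b) < r (\<omega> a)" if "b < n" for a b
      unfolding \<sigma>_def by (rule rank_less_iff) (use that in auto)
    have inner: "(\<Sum>j=1..<\<sigma> a + 1. fj j (os j)) = (\<Sum>b<n. if r (\<omega> b) < r (\<omega> a) then fj (\<sigma> b + 1) (\<omega> b) else 0)"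
      if a: "a \<in> I" for a
    proof -
      have "{b\<in>{..<n}. r (\<omega> b) < r (\<omega> a)} \<subset> {..<n}" using a by (auto simp: I_def)
      then have "card {b\<in>{..<n}. r (\<omega> b) < r (\<omega> a)} < card {..<n}"
        by (rule psubset_card_mono[OF finite_lessThan])
      then have "\<sigma> a < n" unfolding \<sigma>_def by simp
      then have seteq: "{j\<in>{1..n}. j < \<sigma> a + 1} = {1..<\<sigma> a + 1}" by auto
      have "(\<Sum>j=1..<\<sigma> a + 1. fj j (os j)) = (\<Sum>j=1..n. (\<lambda>j y. if j < \<sigma> a + 1 then fj j y else 0) j (os j))"
        unfolding seteq[symmetric] using sum.inter_filter[of "{1..n}" "\<lambda>j. fj j (os j)" "\<lambda>j. j < \<sigma> a + 1"] by simp
      also have "\<dots> = (\<Sum>b<n. if \<sigma> b + 1 < \<sigma> a + 1 then fj (\<sigma> b + 1) (\<omega> b) else 0)"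
        by (subst reidx) simp
      also have "\<dots> = (\<Sum>b<n. if r (\<omega> b) < r (\<omega> a) then fj (\<sigma> b + 1) (\<omega> b) else 0)"
        by (intro sum.cong refl) (simp add: rk)
      finally show ?thesis .
    qed
    have step3: "(if r (\<omega> b) < r (\<omega> a) then fj (\<sigma> b + 1) (\<omega> b) else 0)
        = (\<Sum>T\<in>Sub2 a b. \<Prod>c\<in>T. q (\<omega> b) (\<omega> c)) * W (\<omega> a) (\<omega> b) / C2" for a b
    proof (cases "r (\<omega> b) < r (\<omega> a)")
      case True
      have X: "real (\<sigma> b choose (k - 2)) = (\<Sum>T\<in>Sub2 a b. \<Prod>c\<in>T. q (\<omega> b) (\<omega> c))"
        unfolding \<sigma>_def Sub2_def by (rule binom[of b "{a, b}"]) (use True in auto)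
      show ?thesis using True by (simp add: fj_def X W_def q_def)
    next
      case False
      then show ?thesis by (simp add: W_def q_def)
    qed
    have step4: "(\<Sum>b<n. if r (\<omega> b) < r (\<omega> a) then fj (\<sigma> b + 1) (\<omega> b) else 0)
        = (\<Sum>b\<in>I - {a}. (\<Sum>T\<in>Sub2 a b. \<Prod>c\<in>T. q (\<omega> b) (\<omega> c)) * W (\<omega> a) (\<omega> b) / C2)"
      if a: "a \<in> I" for a
    proof -
      have "(\<Sum>b<n. if r (\<omega> b) < r (\<omega> a) then fj (\<sigma> b + 1) (\<omega> b) else 0)
          = (\<Sum>b\<in>I. if r (\<omega> b) < r (\<omega> a) then fj (\<sigma> b + 1) (\<omega> b) else 0)" by (simp add: I_def)
      also have "\<dots> = (\<Sum>b\<in>I - {a}. if r (\<omega> b) < r (\<omega> a) then fj (\<sigma> b + 1) (\<omega> b) else 0)"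
        using a finI by (subst sum.remove[of I a]) auto
      also have "\<dots> = (\<Sum>b\<in>I - {a}. (\<Sum>T\<in>Sub2 a b. \<Prod>c\<in>T. q (\<omega> b) (\<omega> c)) * W (\<omega> a) (\<omega> b) / C2)"
        by (intro sum.cong refl step3)
      finally show ?thesis .
    qed
    have "term2 r s n k \<omega> = (\<Sum>a\<in>I. (1 / real n) *\<^sub>R ((\<kappa> * (\<Sum>b\<in>I - {a}. (\<Sum>T\<in>Sub2 a b. \<Prod>c\<in>T. q (\<omega> b) (\<omega> c)) * W (\<omega> a) (\<omega> b) / C2)) *\<^sub>R s (\<omega> a)))"
      unfolding t2 scaleR_sum_right
    proof (rule sum.cong)
      show "{..<n} = I" by (simp add: I_def)
    next
      fix a assume a: "a \<in> I"
      show "(1 / real n) *\<^sub>R ((\<kappa> * (\<Sum>j=1..<\<sigma> a + 1. fj j (os j))) *\<^sub>R s (\<omega> a))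
          = (1 / real n) *\<^sub>R ((\<kappa> * (\<Sum>b\<in>I - {a}. (\<Sum>T\<in>Sub2 a b. \<Prod>c\<in>T. q (\<omega> b) (\<omega> c)) * W (\<omega> a) (\<omega> b) / C2)) *\<^sub>R s (\<omega> a))"
        by (simp only: inner[OF a] step4[OF a])
    qed
    also have "\<dots> = T2 \<omega>"
      unfolding T2_def
    proof (intro sum.cong refl)
      fix a assume a: "a \<in> I"
      have "(\<Sum>b\<in>I - {a}. \<Sum>T\<in>Sub2 a b. c2 *\<^sub>R (((\<Prod>c\<in>T. q (\<omega> b) (\<omega> c)) * W (\<omega> a) (\<omega> b)) *\<^sub>R s' (\<omega> a)))
          = (\<Sum>b\<in>I - {a}. \<Sum>T\<in>Sub2 a b. c2 * ((\<Prod>c\<in>T. q (\<omega> b) (\<omega> c)) * W (\<omega> a) (\<omega> b))) *\<^sub>R s' (\<omega> a)"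
        by (simp add: scaleR_sum_left)
      also have "(\<Sum>b\<in>I - {a}. \<Sum>T\<in>Sub2 a b. c2 * ((\<Prod>c\<in>T. q (\<omega> b) (\<omega> c)) * W (\<omega> a) (\<omega> b)))
          = (1 / real n) * (\<kappa> * (\<Sum>b\<in>I - {a}. (\<Sum>T\<in>Sub2 a b. \<Prod>c\<in>T. q (\<omega> b) (\<omega> c)) * W (\<omega> a) (\<omega> b) / C2))"
      proof -
        define Pi where "Pi b = (\<Sum>T\<in>Sub2 a b. \<Prod>c\<in>T. q (\<omega> b) (\<omega> c))" for b
        have "(\<Sum>b\<in>I - {a}. \<Sum>T\<in>Sub2 a b. c2 * ((\<Prod>c\<in>T. q (\<omega> b) (\<omega> c)) * W (\<omega> a) (\<omega> b)))
            = (\<Sum>b\<in>I - {a}. c2 * (Pi b * W (\<omega> a) (\<omega> b)))"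
          unfolding Pi_def by (intro sum.cong refl) (simp only: sum_distrib_left sum_distrib_right)
        also have "\<dots> = c2 * (\<Sum>b\<in>I - {a}. Pi b * W (\<omega> a) (\<omega> b))"
          by (simp only: sum_distrib_left)
        also have "\<dots> = (1 / real n) * (\<kappa> * (\<Sum>b\<in>I - {a}. Pi b * W (\<omega> a) (\<omega> b) / C2))"
          by (simp only: sum_divide_distrib[symmetric]) (simp add: c2_def \<kappa>_def)
        finally show ?thesis unfolding Pi_def .
      qed
      finally have calc: "(\<Sum>b\<in>I - {a}. \<Sum>T\<in>Sub2 a b. c2 *\<^sub>R (((\<Prod>c\<in>T. q (\<omega> b) (\<omega> c)) * W (\<omega> a) (\<omega> b)) *\<^sub>R s' (\<omega> a)))
          = ((1 / real n) * (\<kappa> * (\<Sum>b\<in>I - {a}. (\<Sum>T\<in>Sub2 a b. \<Prod>c\<in>T. q (\<omega> b) (\<omega> c)) * W (\<omega> a) (\<omega> b) / C2))) *\<^sub>R s' (\<omega> a)" .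
      have ss: "s (\<omega> a) = s' (\<omega> a)" using s_s'[OF \<omega>(1) a] \<omega>(3) a by simp
      show "(1 / real n) *\<^sub>R ((\<kappa> * (\<Sum>b\<in>I - {a}. (\<Sum>T\<in>Sub2 a b. \<Prod>c\<in>T. q (\<omega> b) (\<omega> c)) * W (\<omega> a) (\<omega> b) / C2)) *\<^sub>R s (\<omega> a))
          = (\<Sum>b\<in>I - {a}. \<Sum>T\<in>Sub2 a b. c2 *\<^sub>R (((\<Prod>c\<in>T. q (\<omega> b) (\<omega> c)) * W (\<omega> a) (\<omega> b)) *\<^sub>R s' (\<omega> a)))"
        unfolding ss by (subst calc) (simp only: scaleR_scaleR)
    qed
    finally show ?thesis .
  qed
  have int1': "integrable \<Omega> (term1 r s n k)" using int1 unfolding \<Omega>_def I_def P_def r_def .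
  have int2': "integrable \<Omega> (term2 r s n k)" using int2 unfolding \<Omega>_def I_def P_def r_def .
  have res2: "(\<integral>\<omega>. term2 r s n k \<omega> \<partial>\<Omega>) = (real k - 1) *\<^sub>R E2"
  proof -
    have "(\<integral>\<omega>. term2 r s n k \<omega> \<partial>\<Omega>) = (\<integral>\<omega>. T2 \<omega> \<partial>\<Omega>)"
    proof (rule integral_cong_AE)
      show "term2 r s n k \<in> borel_measurable \<Omega>" using int2' by (rule borel_measurable_integrable)
      show "T2 \<in> borel_measurable \<Omega>" using T2int by (rule borel_measurable_integrable)
      show "AE \<omega> in \<Omega>. term2 r s n k \<omega> = T2 \<omega>"
        using AEall AE_space[of \<Omega>] by eventually_elim (auto intro: pw2)
    qed
    then show ?thesis using T2E by simp
  qed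
  have rhs2: "(\<integral>y. ((real k - 1) * g y) *\<^sub>R s y \<partial>P) = (real k - 1) *\<^sub>R E2"
  proof -
    have "(\<integral>y. ((real k - 1) * g y) *\<^sub>R s y \<partial>P) = (\<integral>y. (real k - 1) *\<^sub>R (g y *\<^sub>R s' y) \<partial>P)"
    proof (rule integral_cong_AE)
      show "(\<lambda>y. ((real k - 1) * g y) *\<^sub>R s y) \<in> borel_measurable P" using int5c by (rule borel_measurable_integrable)
      show "(\<lambda>y. (real k - 1) *\<^sub>R (g y *\<^sub>R s' y)) \<in> borel_measurable P" by measurable
      show "AE y in P. ((real k - 1) * g y) *\<^sub>R s y = (real k - 1) *\<^sub>R (g y *\<^sub>R s' y)"
        using AEs by eventually_elim simp
    qed
    then show ?thesis unfolding E2_def by (simp only: integral_scaleR_right)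
  qed
  have Gpw: "G_hat r s n k \<omega> = real k *\<^sub>R (term1 r s n k \<omega> - term2 r s n k \<omega>)" for \<omega>
    unfolding G_hat_def term1_def term2_def
    by (simp add: scaleR_diff_left sum_subtractf scaleR_diff_right scaleR_sum_right)
  have res3: "(\<integral>\<omega>. G_hat r s n k \<omega> \<partial>\<Omega>) = real k *\<^sub>R (E1 - (real k - 1) *\<^sub>R E2)"
    unfolding Gpw using int1' int2' res1 res2 by simp
  have rhs3: "real k *\<^sub>R (\<integral>y. (c y - (real k - 1) * g y) *\<^sub>R s y \<partial>P) = real k *\<^sub>R (E1 - (real k - 1) *\<^sub>R E2)"
  proof -
    have "(\<integral>y. (c y - (real k - 1) * g y) *\<^sub>R s y \<partial>P) = (\<integral>y. c y *\<^sub>R s y - ((real k - 1) * g y) *\<^sub>R s y \<partial>P)"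
      by (simp add: scaleR_diff_left)
    also have "\<dots> = (\<integral>y. c y *\<^sub>R s y \<partial>P) - (\<integral>y. ((real k - 1) * g y) *\<^sub>R s y \<partial>P)"
      using int4c int5c by (rule Bochner_Integration.integral_diff)
    finally show ?thesis using rhs1 rhs2 by simp
  qed
  have final: "(\<integral>\<omega>. term1 r s n k \<omega> \<partial>\<Omega>) = (\<integral>y. (r y * F y ^ (k - 1)) *\<^sub>R s y \<partial>P)
     \<and> (\<integral>\<omega>. term2 r s n k \<omega> \<partial>\<Omega>) = (\<integral>y. ((real k - 1) * g y) *\<^sub>R s y \<partial>P)
     \<and> (\<integral>\<omega>. G_hat r s n k \<omega> \<partial>\<Omega>) = real k *\<^sub>R (\<integral>y. (r y * F y ^ (k - 1) - (real k - 1) * g y) *\<^sub>R s y \<partial>P)"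
  proof (intro conjI)
    show "(\<integral>\<omega>. term1 r s n k \<omega> \<partial>\<Omega>) = (\<integral>y. (r y * F y ^ (k - 1)) *\<^sub>R s y \<partial>P)"
      using res1 rhs1[unfolded c_def] by (rule trans[OF _ sym])
    show "(\<integral>\<omega>. term2 r s n k \<omega> \<partial>\<Omega>) = (\<integral>y. ((real k - 1) * g y) *\<^sub>R s y \<partial>P)"
      using res2 rhs2 by (rule trans[OF _ sym])
    show "(\<integral>\<omega>. G_hat r s n k \<omega> \<partial>\<Omega>) = real k *\<^sub>R (\<integral>y. (r y * F y ^ (k - 1) - (real k - 1) * g y) *\<^sub>R s y \<partial>P)"
      using res3 rhs3[unfolded c_def] by (rule trans[OF _ sym])
  qed
  show ?thesis using final unfolding \<Omega>_def I_def F_def g_def P_def r_def .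
qed
end
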